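(* (1) $\mathrm{PRT}\subset\mathrm{PRT[O]}\subset\mathrm{PRT[T,O]}$; (2) $\mathrm{PRT}\subset\mathrm{PRT[T]}\subset\mathrm{PRT[T,O]}$; (3) $\mathrm{PRT[O]}\setminus\mathrm{PRT[T]}\neq\emptyset$; (4) $\mathrm{PRT[T]}\setminus\mathrm{PRT[O]}\neq\emptyset$. Here $\subset$ denotes proper inclusion.
   Context: An indexed family is a sequence $\mathcal F=(F_n)_{n\in\mathbb N}$ of subsets of $\mathbb N$ that is uniformly computably enumerable; $F\in\mathcal F$ means $F=F_n$ for some $n$, and $\mathrm{mi}_{\mathcal F}(F)$ is the least $n$ with $F_n=F$. An enumeration of a nonempty set $A$ is an infinite sequence of elements of $A$ in which every element of $A$ occurs; $f\restriction n$ is its initial segment of length $n$, and $\mathrm{content}(\sigma)$ is the set of entries of a finite string $\sigma$. A learner is a partial computable function from finite strings of naturals to naturals; hypothesis $h$ is interpreted as $F_h$. $M$ converges to a correct index on an enumeration $f$ of $F$ if there is $i$ with $M(f\restriction j)=M(f\restriction i)$ for all $j\ge i$ and $F_{M(f\restriction i)}=F$. $\mathcal F$ is PRT-learnable if there are a learner $M$ and a polynomial $p$ such that for every $F\in\mathcal F$ and every enumeration $f$ of $F$, $M$ converges to a correct index on $f$ in fewer than $p(\mathrm{mi}_{\mathcal F}(F))$ computation steps, with the number of oracle queries (if an oracle is used) also bounded by $p(\mathrm{mi}_{\mathcal F}(F))$. A teacher is a computable map $T$ on finite strings with $T(\sigma)$ a prefix of $T(\tau)$ whenever $\sigma$ is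 a prefix of $\tau$, and $\mathrm{content}(T(\sigma))\subseteq\mathrm{content}(\sigma)$. PRT[O]-learnable: some learner with a membership oracle for the target set PRT-learns $\mathcal F$. PRT[T]-learnable: there is a learner-teacher pair $(M,T)$ such that $M$, fed $T(f\restriction n)$ in place of $f\restriction n$, meets the PRT criterion for every enumeration $f$ of every member of $\mathcal F$, counting only the learner's computation. PRT[T,O]-learnable: as for PRT[T], but $M$ additionally has a membership oracle for the target and $T$ has access to the oracle answers $M$ receives. PRT, PRT[O], PRT[T], PRT[T,O] denote the corresponding classes of indexed families. *)

theory Defs
  imports Main "HOL-Computational_Algebra.Polynomial" "HOL-Library.Sublist"
begin

datatype instr =
    Inc nat
  | Dec nat
  | Add nat nat nat
  | Sub nat nat nat
  | Jz nat nat
  | Len nat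
  | Rd nat nat
  | Out nat
  | Qry nat nat

type_synonym prog = "instr list"

record cfg =
  pc :: nat
  reg :: "nat \<Rightarrow> nat"
  outp :: "nat list"
  trans :: "(nat \<times> bool) list"

definition init_cfg :: cfg where
  "init_cfg = \<lparr>pc = 0, reg = (\<lambda>_. 0), outp = [], trans = []\<rparr>"

definition step :: "prog \<Rightarrow> (nat \<Rightarrow> bool) \<Rightarrow> nat list \<Rightarrow> cfg \<Rightarrow> cfg" where
  "step P A xs c =
    (if length P \<le> pc c then c else
     (case P ! pc c of
        Inc r \<Rightarrow> c\<lparr>pc := Suc (pc c), reg := (reg c)(r := reg c r + 1)\<rparr>
      | Dec r \<Rightarrow> c\<lparr>pc := Suc (pc c), reg := (reg c)(r := reg c r - 1)\<rparr>
      | Add r s t \<Rightarrow> c\<lparr>pc := Suc (pc c), reg := (reg c)(r := reg c s + reg c t)\<rparr>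
      | Sub r s t \<Rightarrow> c\<lparr>pc := Suc (pc c), reg := (reg c)(r := reg c s - reg c t)\<rparr>
      | Jz r l \<Rightarrow> c\<lparr>pc := (if reg c r = 0 then l else Suc (pc c))\<rparr>
      | Len r \<Rightarrow> c\<lparr>pc := Suc (pc c), reg := (reg c)(r := length xs)\<rparr>
      | Rd r s \<Rightarrow> c\<lparr>pc := Suc (pc c),
                   reg := (reg c)(r := (if reg c s < length xs then xs ! reg c s else 0))\<rparr>
      | Out r \<Rightarrow> c\<lparr>pc := Suc (pc c), outp := outp c @ [reg c r]\<rparr>
      | Qry r s \<Rightarrow> c\<lparr>pc := Suc (pc c),
                    reg := (reg c)(r := (if A (reg c s) then 1 else 0)),
                    trans := trans c @ [(reg c s, A (reg c s))]\<rparr>))"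

definition run :: "prog \<Rightarrow> (nat \<Rightarrow> bool) \<Rightarrow> nat list \<Rightarrow> nat \<Rightarrow> cfg" where
  "run P A xs t = (step P A xs ^^ t) init_cfg"

definition halted :: "prog \<Rightarrow> cfg \<Rightarrow> bool" where
  "halted P c \<longleftrightarrow> length P \<le> pc c"

definition defined :: "prog \<Rightarrow> (nat \<Rightarrow> bool) \<Rightarrow> nat list \<Rightarrow> bool" where
  "defined P A xs \<longleftrightarrow> (\<exists>t. halted P (run P A xs t))"

definition steps :: "prog \<Rightarrow> (nat \<Rightarrow> bool) \<Rightarrow> nat list \<Rightarrow> nat" where
  "steps P A xs = (LEAST t. halted P (run P A xs t))"

definition final :: "prog \<Rightarrow> (nat \<Rightarrow> bool) \<Rightarrow> nat list \<Rightarrow> cfg" where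
  "final P A xs = run P A xs (steps P A xs)"

definition result :: "prog \<Rightarrow> (nat \<Rightarrow> bool) \<Rightarrow> nat list \<Rightarrow> nat" where
  "result P A xs = reg (final P A xs) 0"

definition outlist :: "prog \<Rightarrow> (nat \<Rightarrow> bool) \<Rightarrow> nat list \<Rightarrow> nat list" where
  "outlist P A xs = outp (final P A xs)"

definition queries :: "prog \<Rightarrow> (nat \<Rightarrow> bool) \<Rightarrow> nat list \<Rightarrow> (nat \<times> bool) list" where
  "queries P A xs = trans (final P A xs)"

definition no_oracle :: "nat \<Rightarrow> bool" where
  "no_oracle = (\<lambda>_. False)"

definition indexed_family :: "(nat \<Rightarrow> nat set) \<Rightarrow> bool" where
  "indexed_family F \<longleftrightarrow> (\<exists>P. \<forall>n x. x \<in> F n \<longleftrightarrow> defined P no_oracle [n, x])"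

definition mi :: "(nat \<Rightarrow> nat set) \<Rightarrow> nat set \<Rightarrow> nat" where
  "mi F X = (LEAST n. F n = X)"

definition restr :: "(nat \<Rightarrow> nat) \<Rightarrow> nat \<Rightarrow> nat list" where
  "restr f n = map f [0..<n]"

definition conv_within ::
  "(nat \<Rightarrow> nat set) \<Rightarrow> prog \<Rightarrow> (nat \<Rightarrow> bool) \<Rightarrow> (nat \<Rightarrow> nat list) \<Rightarrow> nat set \<Rightarrow> nat \<Rightarrow> bool" where
  "conv_within F M A tau X b \<longleftrightarrow>
     (\<exists>i. (\<forall>j. defined M A (tau j))
        \<and> (\<forall>j\<ge>i. result M A (tau j) = result M A (tau i))
        \<and> F (result M A (tau i)) = X
        \<and> (\<Sum>j\<le>i. steps M A (tau j)) < b
        \<and> (\<Sum>j\<le>i. length (queries M A (tau j))) \<le> b)"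

definition PRT :: "(nat \<Rightarrow> nat set) set" where
  "PRT = {F. indexed_family F \<and>
     (\<exists>M p. \<forall>n f. range f = F n \<longrightarrow>
        conv_within F M no_oracle (restr f) (F n) (poly p (mi F (F n))))}"

definition PRT_O :: "(nat \<Rightarrow> nat set) set" where
  "PRT_O = {F. indexed_family F \<and>
     (\<exists>M p. \<forall>n f. range f = F n \<longrightarrow>
        conv_within F M (\<lambda>x. x \<in> F n) (restr f) (F n) (poly p (mi F (F n))))}"

definition teacher :: "prog \<Rightarrow> bool" where
  "teacher T \<longleftrightarrow>
     (\<forall>\<sigma>. defined T no_oracle \<sigma>)
   \<and> (\<forall>\<sigma> \<tau>. prefix \<sigma> \<tau> \<longrightarrow> prefix (outlist T no_oracle \<sigma>) (outlist T no_oracle \<tau>))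
   \<and> (\<forall>\<sigma>. set (outlist T no_oracle \<sigma>) \<subseteq> set \<sigma>)"

definition PRT_T :: "(nat \<Rightarrow> nat set) set" where
  "PRT_T = {F. indexed_family F \<and>
     (\<exists>M T p. teacher T \<and> (\<forall>n f. range f = F n \<longrightarrow>
        conv_within F M no_oracle (\<lambda>j. outlist T no_oracle (restr f j)) (F n)
          (poly p (mi F (F n)))))}"

text \<open>Teachers with access to the learner's oracle answers: the teacher's input is the
  string sigma together with the transcript h of oracle queries/answers, coded as a list.\<close>
definition enc :: "nat list \<Rightarrow> (nat \<times> bool) list \<Rightarrow> nat list" where
  "enc \<sigma> h = length \<sigma> # \<sigma> @ concat (map (\<lambda>(q, a). [q, if a then 1 else 0]) h)"

definition teacher_TO :: "prog \<Rightarrow> bool" where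
  "teacher_TO T \<longleftrightarrow>
     (\<forall>\<sigma> h. defined T no_oracle (enc \<sigma> h))
   \<and> (\<forall>\<sigma> \<tau> h h'. prefix \<sigma> \<tau> \<longrightarrow> prefix h h' \<longrightarrow>
        prefix (outlist T no_oracle (enc \<sigma> h)) (outlist T no_oracle (enc \<tau> h')))
   \<and> (\<forall>\<sigma> h. set (outlist T no_oracle (enc \<sigma> h)) \<subseteq> set \<sigma>)"

text \<open>History of oracle answers received by the learner before stage n of the interaction.\<close>
fun hist :: "prog \<Rightarrow> prog \<Rightarrow> (nat \<Rightarrow> bool) \<Rightarrow> (nat \<Rightarrow> nat) \<Rightarrow> nat \<Rightarrow> (nat \<times> bool) list" where
  "hist M T A f 0 = []"
| "hist M T A f (Suc n) = hist M T A f n @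
     queries M A (outlist T no_oracle (enc (restr f n) (hist M T A f n)))"

definition tinput :: "prog \<Rightarrow> prog \<Rightarrow> (nat \<Rightarrow> bool) \<Rightarrow> (nat \<Rightarrow> nat) \<Rightarrow> nat \<Rightarrow> nat list" where
  "tinput M T A f n = outlist T no_oracle (enc (restr f n) (hist M T A f n))"

definition PRT_TO :: "(nat \<Rightarrow> nat set) set" where
  "PRT_TO = {F. indexed_family F \<and>
     (\<exists>M T p. teacher_TO T \<and> (\<forall>n f. range f = F n \<longrightarrow>
        conv_within F M (\<lambda>x. x \<in> F n) (tinput M T (\<lambda>x. x \<in> F n) f) (F n)
          (poly p (mi F (F n)))))}"

end

theory Submission
  imports Defs
begin

lemma run_0[simp]: "run P A xs 0 = init_cfg" by (simp add: run_def)
lemma run_Suc: "run P A xs (Suc t) = step P A xs (run P A xs t)"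
  by (simp add: run_def)

lemma step_halted: "halted P c \<Longrightarrow> step P A xs c = c"
  by (simp add: step_def halted_def)

lemma run_halted_mono: "halted P (run P A xs t) \<Longrightarrow> t \<le> t' \<Longrightarrow> run P A xs t' = run P A xs t"
proof (induction t' )
  case 0 then show ?case by simp
next
  case (Suc t')
  show ?case
  proof (cases "t = Suc t'")
    case True then show ?thesis by simp
  next
    case False
    then have "t \<le> t'" using Suc by simp
    then have "run P A xs t' = run P A xs t" using Suc by simp
    then show ?thesis using Suc step_halted by (simp add: run_Suc)
  qed
qed

lemma final_eq: assumes "halted P (run P A xs t)"
  shows "final P A xs = run P A xs t" "steps P A xs \<le> t" "defined P A xs"
proof -
  show st: "steps P A xs \<le> t" unfolding steps_def using assms by (rule Least_le)
  have h: "halted P (run P A xs (steps P A xs))" unfolding steps_def using assms by (rule LeastI)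
  show "final P A xs = run P A xs t" unfolding final_def
    using run_halted_mono[OF h st] by simp
  show "defined P A xs" using assms defined_def by blast
qed

lemma defined_halted: "defined P A xs \<Longrightarrow> halted P (final P A xs)"
  unfolding defined_def final_def steps_def by (metis LeastI)

lemma steps_pos: "P \<noteq> [] \<Longrightarrow> defined P A xs \<Longrightarrow> steps P A xs \<ge> 1"
  using defined_halted[of P A xs] unfolding final_def
  by (cases "steps P A xs") (auto simp: halted_def init_cfg_def)

lemma trans_len_le: "length (trans (run P A xs t)) \<le> t"
proof (induction t)
  case 0 then show ?case by (simp add: init_cfg_def)
next
  case (Suc t)
  then show ?case
    by (auto simp: run_Suc step_def split: instr.split)
qed

lemma queries_le_steps: "length (queries P A xs) \<le> steps P A xs"
  unfolding queries_def final_def by (rule trans_len_le)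

definition idT :: prog where
  "idT = [Len 1, Sub 3 1 2, Jz 3 7, Rd 4 2, Out 4, Inc 2, Jz 0 1]"

lemma fpow_Suc: "(f ^^ Suc n) x = (f ^^ n) (f x)" by (induction n) auto

lemma step_app: "step P A xs c =
    (if length P \<le> pc c then c else
     (case P ! pc c of
        Inc r \<Rightarrow> c\<lparr>pc := Suc (pc c), reg := (reg c)(r := reg c r + 1)\<rparr>
      | Dec r \<Rightarrow> c\<lparr>pc := Suc (pc c), reg := (reg c)(r := reg c r - 1)\<rparr>
      | Add r s t \<Rightarrow> c\<lparr>pc := Suc (pc c), reg := (reg c)(r := reg c s + reg c t)\<rparr>
      | Sub r s t \<Rightarrow> c\<lparr>pc := Suc (pc c), reg := (reg c)(r := reg c s - reg c t)\<rparr>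
      | Jz r l \<Rightarrow> c\<lparr>pc := (if reg c r = 0 then l else Suc (pc c))\<rparr>
      | Len r \<Rightarrow> c\<lparr>pc := Suc (pc c), reg := (reg c)(r := length xs)\<rparr>
      | Rd r s \<Rightarrow> c\<lparr>pc := Suc (pc c),
                   reg := (reg c)(r := (if reg c s < length xs then xs ! reg c s else 0))\<rparr>
      | Out r \<Rightarrow> c\<lparr>pc := Suc (pc c), outp := outp c @ [reg c r]\<rparr>
      | Qry r s \<Rightarrow> c\<lparr>pc := Suc (pc c),
                    reg := (reg c)(r := (if A (reg c s) then 1 else 0)),
                    trans := trans c @ [(reg c s, A (reg c s))]\<rparr>))"
  by (rule step_def)

lemma idT_loop:
  "\<And>c. pc c = 1 \<Longrightarrow> reg c 0 = 0 \<Longrightarrow> reg c 1 = length xs \<Longrightarrow> reg c 2 = length xs - k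
   \<Longrightarrow> k \<le> length xs \<Longrightarrow> outp c = take (length xs - k) xs
   \<Longrightarrow> \<exists>t. halted idT ((step idT A xs ^^ t) c) \<and> outp ((step idT A xs ^^ t) c) = xs"
proof (induction k)
  case 0
  show ?case
    apply (rule exI[of _ "Suc (Suc 0)"])
    using 0 by (simp add: fpow_Suc step_app idT_def halted_def)
next
  case (Suc k)
  let ?c = "(step idT A xs ^^ Suc (Suc (Suc (Suc (Suc (Suc 0)))))) c"
  have e: "pc ?c = 1 \<and> reg ?c 0 = 0 \<and> reg ?c 1 = length xs \<and> reg ?c 2 = length xs - k
      \<and> outp ?c = take (length xs - k) xs"
    proof -
      have lxk: "length xs - k = Suc (length xs - Suc k)" using Suc.prems by arith
      show ?thesis using Suc.prems
        by (simp add: fpow_Suc step_app idT_def lxk take_Suc_conv_app_nth)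
    qed
  obtain t where "halted idT ((step idT A xs ^^ t) ?c) \<and> outp ((step idT A xs ^^ t) ?c) = xs"
    using Suc.IH[of ?c] e Suc.prems by auto
  then show ?case by (metis funpow_add o_apply)
qed

lemma run_shift: "run P A xs (Suc t) = (step P A xs ^^ t) (run P A xs 1)"
  unfolding run_def One_nat_def fpow_Suc funpow_0 by (rule refl)

lemma idT_out: "defined idT A xs \<and> outlist idT A xs = xs"
proof -
  have r1: "pc (run idT A xs 1) = 1 \<and> reg (run idT A xs 1) 0 = 0 \<and> reg (run idT A xs 1) 1 = length xs
    \<and> reg (run idT A xs 1) 2 = length xs - length xs \<and> outp (run idT A xs 1) = take (length xs - length xs) xs"
    by (simp add: run_def step_app idT_def init_cfg_def)
  obtain t where "halted idT ((step idT A xs ^^ t) (run idT A xs 1)) \<and> outp ((step idT A xs ^^ t) (run idT A xs 1)) = xs"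
    using idT_loop[OF _ _ _ _ le_refl, of "run idT A xs 1" xs A] r1 by auto
  then have h: "halted idT (run idT A xs (Suc t)) \<and> outp (run idT A xs (Suc t)) = xs"
    by (simp only: run_shift)
  then show ?thesis using final_eq[of idT A xs "Suc t"] by (simp add: outlist_def)
qed

lemma teacher_idT: "teacher idT"
  unfolding teacher_def using idT_out by auto

fun noq :: "instr \<Rightarrow> instr" where
  "noq (Qry r s) = Sub r r r"
| "noq i = i"

definition noqP :: "prog \<Rightarrow> prog" where "noqP M = map noq M"

lemma noq_sim: "pc (run (noqP M) A xs t) = pc (run M no_oracle xs t)
  \<and> reg (run (noqP M) A xs t) = reg (run M no_oracle xs t)
  \<and> outp (run (noqP M) A xs t) = outp (run M no_oracle xs t)
  \<and> trans (run (noqP M) A xs t) = []"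
proof (induction t)
  case 0 then show ?case by (simp add: init_cfg_def)
next
  case (Suc t)
  show ?case
  proof (cases "length M \<le> pc (run M no_oracle xs t)")
    case True
    then show ?thesis using Suc by (simp add: run_Suc step_app noqP_def)
  next
    case False
    then show ?thesis using Suc
      by (cases "M ! pc (run M no_oracle xs t)") (auto simp: run_Suc step_app noqP_def no_oracle_def)
  qed
qed

lemma noq_halted: "halted (noqP M) (run (noqP M) A xs t) = halted M (run M no_oracle xs t)"
  using noq_sim by (simp add: halted_def noqP_def)

lemma noq_steps: "steps (noqP M) A xs = steps M no_oracle xs"
  unfolding steps_def noq_halted ..

lemma noq_defined: "defined (noqP M) A xs = defined M no_oracle xs"
  unfolding defined_def noq_halted ..

lemma noq_result: "result (noqP M) A xs = result M no_oracle xs"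
  unfolding result_def final_def noq_steps using noq_sim by simp

lemma noq_outlist: "outlist (noqP M) A xs = outlist M no_oracle xs"
  unfolding outlist_def final_def noq_steps using noq_sim by simp

lemma noq_queries: "queries (noqP M) A xs = []"
  unfolding queries_def final_def using noq_sim by simp

lemma noq_conv: "conv_within F M no_oracle tau X b \<Longrightarrow> conv_within F (noqP M) A tau X b"
  unfolding conv_within_def noq_steps noq_defined noq_result noq_queries by auto

definition blk :: "nat \<Rightarrow> instr \<Rightarrow> instr list" where
"blk i ins = (let b = 6*i+2; J = Jz 0 (b+6) in case ins of
    Inc r \<Rightarrow> [Inc (r+4), J, J, J, J, J]
  | Dec r \<Rightarrow> [Dec (r+4), J, J, J, J, J]
  | Add r s t \<Rightarrow> [Add (r+4) (s+4) (t+4), J, J, J, J, J]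
  | Sub r s t \<Rightarrow> [Sub (r+4) (s+4) (t+4), J, J, J, J, J]
  | Jz r l \<Rightarrow> [Jz (r+4) (6*l+2), J, J, J, J, J]
  | Len r \<Rightarrow> [Rd (r+4) 0, J, J, J, J, J]
  | Rd r s \<Rightarrow> [Sub 3 1 (s+4), Jz 3 (b+5), Add 3 (s+4) 2, Rd (r+4) 3, J, Sub (r+4) (r+4) (r+4)]
  | Out r \<Rightarrow> [Out (r+4), J, J, J, J, J]
  | Qry r s \<Rightarrow> [Qry (r+4) (s+4), J, J, J, J, J])"

lemma blk_len: "length (blk i ins) = 6"
  by (cases ins) (simp_all add: blk_def Let_def)

definition cmpl :: "prog \<Rightarrow> prog" where
  "cmpl T = [Rd 1 0, Inc 2] @ concat (map (\<lambda>i. blk i (T ! i)) [0..<length T])"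

lemma concat_blocks: "(\<And>i. length (f i) = 6) \<Longrightarrow> i < n \<Longrightarrow> d < 6 \<Longrightarrow>
   concat (map f [0..<n]) ! (6*i + d) = f i ! d"
proof (induction n)
  case 0 then show ?case by simp
next
  case (Suc n)
  have len: "length (concat (map f [0..<n])) = 6 * n"
    using Suc.prems(1) by (induction n) auto
  show ?case
  proof (cases "i < n")
    case True
    then have "6*i + d < 6*n" using Suc.prems by linarith
    then show ?thesis using Suc True by (simp add: nth_append len)
  next
    case False
    then have "i = n" using Suc.prems by simp
    then show ?thesis by (simp add: nth_append len)
  qed
qed

lemma cmpl_len: "length (cmpl T) = 6 * length T + 2"
proof -
  have "length (concat (map (\<lambda>i. blk i (T ! i)) [0..<n])) = 6 * n" for n
    by (induction n) (auto simp: blk_len)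
  then show ?thesis by (simp add: cmpl_def)
qed

lemma cmpl_nth: "i < length T \<Longrightarrow> d < 6 \<Longrightarrow> cmpl T ! (6*i + 2 + d) = blk i (T ! i) ! d"
  unfolding cmpl_def using concat_blocks[of "\<lambda>i. blk i (T ! i)" i "length T" d]
  by (simp add: blk_len nth_append add.commute[of _ 2])

definition R :: "nat list \<Rightarrow> cfg \<Rightarrow> cfg \<Rightarrow> bool" where
  "R \<sigma> c c' \<longleftrightarrow> pc c' = 6 * pc c + 2 \<and> reg c' 0 = 0 \<and> reg c' 1 = length \<sigma> \<and> reg c' 2 = 1
     \<and> (\<forall>r. reg c' (r+4) = reg c r) \<and> outp c' = outp c"

lemma enc_nth: "s < length \<sigma> \<Longrightarrow> enc \<sigma> h ! Suc s = \<sigma> ! s"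
  by (simp add: enc_def nth_append)
lemma enc_len: "length \<sigma> < length (enc \<sigma> h)"
  by (simp add: enc_def)
lemma enc_0: "enc \<sigma> h ! 0 = length \<sigma>"
  by (simp add: enc_def)

lemma num_Suc: "(5::nat) + n = Suc (Suc (Suc (Suc (Suc n))))" "(6::nat) + n = Suc (Suc (Suc (Suc (Suc (Suc n)))))"
  "(7::nat) + n = Suc (Suc (Suc (Suc (Suc (Suc (Suc n))))))" "(8::nat) + n = Suc (Suc (Suc (Suc (Suc (Suc (Suc (Suc n)))))))"
  by simp_all

lemma cmpl_step:
  assumes r: "R \<sigma> c c'" and nh: "pc c < length T"
  shows "\<exists>k. R \<sigma> (step T A \<sigma> c) ((step (cmpl T) A (enc \<sigma> h) ^^ k) c')"
proof -
  let ?i = "pc c"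
  let ?T' = "cmpl T"
  let ?x = "enc \<sigma> h"
  have n: "\<And>d. d < 6 \<Longrightarrow> ?T' ! (Suc (Suc (6 * ?i)) + d) = blk ?i (T ! ?i) ! d"
    using cmpl_nth nh by (metis add_2_eq_Suc')
  have L: "length ?T' = 6 * length T + 2" by (rule cmpl_len)
  show ?thesis
  proof (cases "T ! ?i")
    case (Inc r)
    show ?thesis
      apply (rule exI[of _ "Suc (Suc 0)"])
      using r nh n[of 0, simplified] n[of "Suc 0"] L Inc
      by (auto simp: R_def step_app blk_def fpow_Suc Let_def num_Suc)
  next
    case (Dec r)
    show ?thesis
      apply (rule exI[of _ "Suc (Suc 0)"])
      using r nh n[of 0, simplified] n[of "Suc 0"] L Dec
      by (auto simp: R_def step_app blk_def fpow_Suc Let_def num_Suc)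
  next
    case (Add r s t)
    show ?thesis
      apply (rule exI[of _ "Suc (Suc 0)"])
      using r nh n[of 0, simplified] n[of "Suc 0"] L Add
      by (auto simp: R_def step_app blk_def fpow_Suc Let_def num_Suc)
  next
    case (Sub r s t)
    show ?thesis
      apply (rule exI[of _ "Suc (Suc 0)"])
      using r nh n[of 0, simplified] n[of "Suc 0"] L Sub
      by (auto simp: R_def step_app blk_def fpow_Suc Let_def num_Suc)
  next
    case (Len r)
    show ?thesis
      apply (rule exI[of _ "Suc (Suc 0)"])
      using r nh n[of 0, simplified] n[of "Suc 0"] L Len enc_0[of \<sigma> h] enc_len[of \<sigma> h]
      by (auto simp: R_def step_app blk_def fpow_Suc Let_def num_Suc)
  next
    case (Out r)
    show ?thesis
      apply (rule exI[of _ "Suc (Suc 0)"])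
      using r nh n[of 0, simplified] n[of "Suc 0"] L Out
      by (auto simp: R_def step_app blk_def fpow_Suc Let_def num_Suc)
  next
    case (Qry r s)
    show ?thesis
      apply (rule exI[of _ "Suc (Suc 0)"])
      using r nh n[of 0, simplified] n[of "Suc 0"] L Qry
      by (auto simp: R_def step_app blk_def fpow_Suc Let_def num_Suc)
  next
    case (Jz r l)
    show ?thesis
    proof (cases "reg c r = 0")
      case True
      show ?thesis
        apply (rule exI[of _ "Suc 0"])
        using r nh n[of 0, simplified] L Jz True
        by (auto simp: R_def step_app blk_def fpow_Suc Let_def num_Suc)
    next
      case False
      show ?thesis
        apply (rule exI[of _ "Suc (Suc 0)"])
        using r nh n[of 0, simplified] n[of "Suc 0"] L Jz False
        by (auto simp: R_def step_app blk_def fpow_Suc Let_def num_Suc)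
    qed
  next
    case (Rd r s)
    show ?thesis
    proof (cases "reg c s < length \<sigma>")
      case True
      show ?thesis
        apply (rule exI[of _ "Suc (Suc (Suc (Suc (Suc 0))))"])
        using r nh n[of 0, simplified] n[of "Suc 0"] n[of "Suc (Suc 0)"] n[of "Suc (Suc (Suc 0))"] n[of "Suc (Suc (Suc (Suc 0)))"] L Rd True enc_nth[OF True, of h] enc_len[of \<sigma> h]
        by (auto simp: R_def step_app blk_def fpow_Suc Let_def num_Suc)
    next
      case False
      show ?thesis
        apply (rule exI[of _ "Suc (Suc (Suc 0))"])
        using r nh n[of 0, simplified] n[of "Suc 0"] n[of "Suc (Suc (Suc (Suc (Suc 0))))"] L Rd False
        by (auto simp: R_def step_app blk_def fpow_Suc Let_def num_Suc)
    qed
  qed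
qed

lemma cmpl_init: "R \<sigma> init_cfg (run (cmpl T) A (enc \<sigma> h) (Suc (Suc 0)))"
  using enc_0[of \<sigma> h] enc_len[of \<sigma> h] cmpl_nth[of 0 T]
  by (auto simp: R_def run_Suc step_app cmpl_def init_cfg_def)

lemma cmpl_sim: "\<exists>k. R \<sigma> (run T A \<sigma> t) ((step (cmpl T) A (enc \<sigma> h) ^^ k) (run (cmpl T) A (enc \<sigma> h) (Suc (Suc 0))))"
proof (induction t)
  case 0
  show ?case using cmpl_init by (metis funpow_0 run_0)
next
  case (Suc t)
  then obtain k where k: "R \<sigma> (run T A \<sigma> t) ((step (cmpl T) A (enc \<sigma> h) ^^ k) (run (cmpl T) A (enc \<sigma> h) (Suc (Suc 0))))"
    by blast
  show ?case
  proof (cases "pc (run T A \<sigma> t) < length T")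
    case True
    from cmpl_step[OF k True, of A h] obtain k' where
      "R \<sigma> (step T A \<sigma> (run T A \<sigma> t)) ((step (cmpl T) A (enc \<sigma> h) ^^ k') ((step (cmpl T) A (enc \<sigma> h) ^^ k) (run (cmpl T) A (enc \<sigma> h) (Suc (Suc 0)))))"
      by blast
    then show ?thesis by (metis funpow_add o_apply run_Suc)
  next
    case False
    then have "run T A \<sigma> (Suc t) = run T A \<sigma> t"
      by (simp add: run_Suc step_halted halted_def)
    then show ?thesis using k by metis
  qed
qed

lemma run_plus: "run P A xs (k + t) = (step P A xs ^^ k) (run P A xs t)"
  by (simp add: run_def funpow_add)

lemma cmpl_out: assumes "defined T A \<sigma>"
  shows "defined (cmpl T) A (enc \<sigma> h) \<and> outlist (cmpl T) A (enc \<sigma> h) = outlist T A \<sigma>"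
proof -
  obtain t where ht: "halted T (run T A \<sigma> t)" using assms defined_def by blast
  obtain k where k: "R \<sigma> (run T A \<sigma> t) (run (cmpl T) A (enc \<sigma> h) (k + Suc (Suc 0)))"
    using cmpl_sim[of \<sigma> T A t h] by (metis run_plus)
  have h2: "halted (cmpl T) (run (cmpl T) A (enc \<sigma> h) (k + Suc (Suc 0)))"
    using k ht by (simp add: R_def halted_def cmpl_len)
  show ?thesis using final_eq[OF h2] final_eq[OF ht] k by (simp add: outlist_def R_def)
qed

lemma teacher_cmpl: "teacher T \<Longrightarrow> teacher_TO (cmpl T)"
  unfolding teacher_def teacher_TO_def using cmpl_out by auto

lemma PRT_sub_O: "PRT \<subseteq> PRT_O"
proof
  fix F assume "F \<in> PRT"
  then obtain M p where ix: "indexed_family F" and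
    c: "\<forall>n f. range f = F n \<longrightarrow> conv_within F M no_oracle (restr f) (F n) (poly p (mi F (F n)))"
    unfolding PRT_def by blast
  have "\<forall>n f. range f = F n \<longrightarrow> conv_within F (noqP M) (\<lambda>x. x \<in> F n) (restr f) (F n) (poly p (mi F (F n)))"
    using c noq_conv by blast
  then show "F \<in> PRT_O" unfolding PRT_O_def using ix by blast
qed

lemma idT_restr: "(\<lambda>j. outlist idT no_oracle (restr f j)) = restr f"
  using idT_out by auto

lemma PRT_sub_T: "PRT \<subseteq> PRT_T"
proof
  fix F assume "F \<in> PRT"
  then obtain M p where ix: "indexed_family F" and
    c: "\<forall>n f. range f = F n \<longrightarrow> conv_within F M no_oracle (restr f) (F n) (poly p (mi F (F n)))"
    unfolding PRT_def by blast
  have "\<forall>n f. range f = F n \<longrightarrow> conv_within F M no_oracle (\<lambda>j. outlist idT no_oracle (restr f j)) (F n) (poly p (mi F (F n)))"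
    unfolding idT_restr using c by blast
  then show "F \<in> PRT_T" unfolding PRT_T_def using ix teacher_idT by blast
qed

lemma tinput_cmpl_id: "tinput M (cmpl idT) A f = restr f"
  unfolding tinput_def using cmpl_out idT_out by (auto simp: fun_eq_iff)

lemma PRT_O_sub_TO: "PRT_O \<subseteq> PRT_TO"
proof
  fix F assume "F \<in> PRT_O"
  then obtain M p where ix: "indexed_family F" and
    c: "\<forall>n f. range f = F n \<longrightarrow> conv_within F M (\<lambda>x. x \<in> F n) (restr f) (F n) (poly p (mi F (F n)))"
    unfolding PRT_O_def by blast
  have "\<forall>n f. range f = F n \<longrightarrow> conv_within F M (\<lambda>x. x \<in> F n) (tinput M (cmpl idT) (\<lambda>x. x \<in> F n) f) (F n) (poly p (mi F (F n)))"
    unfolding tinput_cmpl_id using c by blast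
  then show "F \<in> PRT_TO" unfolding PRT_TO_def using ix teacher_cmpl[OF teacher_idT] by blast
qed

lemma tinput_cmpl: "teacher T \<Longrightarrow> tinput M (cmpl T) A f = (\<lambda>j. outlist T no_oracle (restr f j))"
  unfolding tinput_def teacher_def using cmpl_out by (auto simp: fun_eq_iff)

lemma PRT_T_sub_TO: "PRT_T \<subseteq> PRT_TO"
proof
  fix F assume "F \<in> PRT_T"
  then obtain M T p where ix: "indexed_family F" and t: "teacher T" and
    c: "\<forall>n f. range f = F n \<longrightarrow> conv_within F M no_oracle (\<lambda>j. outlist T no_oracle (restr f j)) (F n)
          (poly p (mi F (F n)))"
    unfolding PRT_T_def by blast
  have "\<forall>n f. range f = F n \<longrightarrow> conv_within F (noqP M) (\<lambda>x. x \<in> F n) (tinput (noqP M) (cmpl T) (\<lambda>x. x \<in> F n) f) (F n) (poly p (mi F (F n)))"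
    unfolding tinput_cmpl[OF t] using c noq_conv by blast
  then show "F \<in> PRT_TO" unfolding PRT_TO_def using ix teacher_cmpl[OF t] by blast
qed

definition F3 :: "nat \<Rightarrow> nat set" where "F3 n = {x. x + 1 \<noteq> n}"

definition P3 :: prog where "P3 = [Rd 1 0, Inc 2, Rd 3 2, Inc 3, Sub 4 1 3, Sub 5 3 1, Add 4 4 5, Jz 4 7]"

lemma run_Suc': "run P A xs (Suc t) = step P A xs (run P A xs t)" by (rule run_Suc)

lemma P3_halt: "n \<noteq> x + 1 \<Longrightarrow> defined P3 A [n, x]"
proof -
  assume a: "n \<noteq> x + 1"
  have "halted P3 (run P3 A [n, x] 8)"
    using a by (simp add: numeral_eq_Suc run_Suc step_app P3_def halted_def init_cfg_def)
  then show ?thesis using final_eq by blast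
qed

lemma P3_loop: "\<not> defined P3 A [x + 1, x]"
proof -
  let ?r = "run P3 A [x+1, x]"
  have c7: "pc (?r 7) = 7 \<and> reg (?r 7) 4 = 0"
    by (simp add: numeral_eq_Suc run_Suc step_app P3_def init_cfg_def)
  have fix7: "step P3 A [x+1,x] (?r 7) = ?r 7"
    using c7 by (simp add: step_app P3_def)
  have a: "?r (t + 7) = ?r 7" for t
  proof (induction t)
    case (Suc t)
    have "?r (Suc t + 7) = step P3 A [x+1,x] (?r (t + 7))" by (simp only: add_Suc run_Suc)
    then show ?case using Suc fix7 by simp
  qed simp
  have small: "t < 7 \<Longrightarrow> pc (?r t) < 8" for t
  proof -
    assume "t < 7"
    then have "t = 0 \<or> t = 1 \<or> t = 2 \<or> t = 3 \<or> t = 4 \<or> t = 5 \<or> t = 6" by arith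
    then show ?thesis
      by (auto simp: numeral_eq_Suc run_Suc step_app P3_def init_cfg_def)
  qed
  have "\<not> halted P3 (?r t)" for t
  proof (cases "t < 7")
    case True
    have "length P3 = 8" by (simp add: P3_def)
    then show ?thesis using small[OF True] by (simp add: halted_def)
  next
    case False
    then have "t = (t - 7) + 7" by simp
    then have "?r t = ?r 7" using a by metis
    have "length P3 = 8" by (simp add: P3_def)
    then show ?thesis using c7 \<open>?r t = ?r 7\<close> by (simp add: halted_def)
  qed
  then show ?thesis unfolding defined_def by blast
qed

lemma F3_ix: "indexed_family F3"
  unfolding indexed_family_def
  apply (rule exI[of _ P3])
  using P3_halt P3_loop by (auto simp: F3_def)

definition L3 :: prog where
  "L3 = [Len 1, Sub 3 1 2, Jz 3 9, Qry 4 2, Jz 4 7, Inc 2, Jz 0 1, Inc 2, Add 0 2 5]"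

lemma L3_hit: "pc c = 1 \<Longrightarrow> reg c 1 = length xs \<Longrightarrow> reg c 5 = 0 \<Longrightarrow> reg c 2 < length xs \<Longrightarrow>
   halted L3 ((step L3 (\<lambda>x. x \<in> F3 (reg c 2 + 1)) xs ^^ Suc (Suc (Suc (Suc (Suc (Suc 0)))))) c) \<and>
   reg ((step L3 (\<lambda>x. x \<in> F3 (reg c 2 + 1)) xs ^^ Suc (Suc (Suc (Suc (Suc (Suc 0)))))) c) 0 = reg c 2 + 1"
  by (simp add: fpow_Suc step_app L3_def F3_def halted_def)

lemma L3_miss: "pc c = 1 \<Longrightarrow> reg c 0 = 0 \<Longrightarrow> reg c 1 = length xs \<Longrightarrow> reg c 5 = 0 \<Longrightarrow> reg c 2 < length xs \<Longrightarrow>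
   Q (reg c 2) \<Longrightarrow>
   pc ((step L3 Q xs ^^ Suc (Suc (Suc (Suc (Suc (Suc 0)))))) c) = 1 \<and>
   reg ((step L3 Q xs ^^ Suc (Suc (Suc (Suc (Suc (Suc 0)))))) c) 0 = 0 \<and>
   reg ((step L3 Q xs ^^ Suc (Suc (Suc (Suc (Suc (Suc 0)))))) c) 1 = length xs \<and>
   reg ((step L3 Q xs ^^ Suc (Suc (Suc (Suc (Suc (Suc 0)))))) c) 5 = 0 \<and>
   reg ((step L3 Q xs ^^ Suc (Suc (Suc (Suc (Suc (Suc 0)))))) c) 2 = Suc (reg c 2)"
  by (simp add: fpow_Suc step_app L3_def)

lemma L3_loop:
  "\<And>c. pc c = 1 \<Longrightarrow> reg c 0 = 0 \<Longrightarrow> reg c 1 = length xs \<Longrightarrow> reg c 5 = 0 \<Longrightarrow>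
     reg c 2 + k = length xs \<Longrightarrow> (n = 0 \<or> reg c 2 < n) \<Longrightarrow>
   \<exists>t \<le> 6*k+6. halted L3 ((step L3 (\<lambda>x. x \<in> F3 n) xs ^^ t) c) \<and>
       reg ((step L3 (\<lambda>x. x \<in> F3 n) xs ^^ t) c) 0 = (if 0 < n \<and> n \<le> length xs then n else 0)"
proof (induction k)
  case 0
  show ?case
    apply (rule exI[of _ "Suc (Suc 0)"])
    using 0 by (auto simp: fpow_Suc step_app L3_def halted_def)
next
  case (Suc k)
  let ?A = "\<lambda>x. x \<in> F3 n"
  show ?case
  proof (cases "reg c 2 + 1 = n")
    case True
    have m: "reg c 2 < length xs" using Suc.prems by linarith
    have "n \<le> length xs" "0 < n" using Suc.prems True by linarith+
    then show ?thesis
      using L3_hit[of c xs] Suc.prems m True by (intro exI[of _ "Suc (Suc (Suc (Suc (Suc (Suc 0)))))"]) auto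
  next
    case False
    let ?c = "(step L3 ?A xs ^^ Suc (Suc (Suc (Suc (Suc (Suc 0)))))) c"
    have e: "pc ?c = 1 \<and> reg ?c 0 = 0 \<and> reg ?c 1 = length xs \<and> reg ?c 5 = 0 \<and>
       reg ?c 2 + k = length xs \<and> (n = 0 \<or> reg ?c 2 < n)"
    proof -
      have m: "reg c 2 < length xs" using Suc.prems by linarith
      have q: "reg c 2 \<in> F3 n" using False by (simp add: F3_def)
      show ?thesis using L3_miss[of c xs ?A, OF _ _ _ _ m q] Suc.prems False by auto
    qed
    have "\<exists>t \<le> 6*k+6. halted L3 ((step L3 ?A xs ^^ t) ?c) \<and>
       reg ((step L3 ?A xs ^^ t) ?c) 0 = (if 0 < n \<and> n \<le> length xs then n else 0)"
      apply (rule Suc.IH) using e by simp_all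
    then obtain t where t: "t \<le> 6*k+6" "halted L3 ((step L3 ?A xs ^^ t) ?c) \<and>
       reg ((step L3 ?A xs ^^ t) ?c) 0 = (if 0 < n \<and> n \<le> length xs then n else 0)"
      by blast
    have eq: "(step L3 ?A xs ^^ (t + Suc (Suc (Suc (Suc (Suc (Suc 0))))))) c = (step L3 ?A xs ^^ t) ?c"
      by (simp only: funpow_add o_apply)
    show ?thesis
      apply (rule exI[of _ "t + Suc (Suc (Suc (Suc (Suc (Suc 0)))))"])
      unfolding eq using t by (simp del: funpow.simps)
  qed
qed

lemma L3_run: "defined L3 (\<lambda>x. x \<in> F3 n) xs \<and> steps L3 (\<lambda>x. x \<in> F3 n) xs \<le> 6 * length xs + 7
  \<and> result L3 (\<lambda>x. x \<in> F3 n) xs = (if 0 < n \<and> n \<le> length xs then n else 0)"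
proof -
  let ?A = "\<lambda>x. x \<in> F3 n"
  have r1: "pc (run L3 ?A xs 1) = 1 \<and> reg (run L3 ?A xs 1) 0 = 0 \<and> reg (run L3 ?A xs 1) 1 = length xs
    \<and> reg (run L3 ?A xs 1) 5 = 0 \<and> reg (run L3 ?A xs 1) 2 + length xs = length xs"
    by (simp add: run_def step_app L3_def init_cfg_def)
  obtain t where t: "t \<le> 6 * length xs + 6" "halted L3 ((step L3 ?A xs ^^ t) (run L3 ?A xs 1)) \<and>
       reg ((step L3 ?A xs ^^ t) (run L3 ?A xs 1)) 0 = (if 0 < n \<and> n \<le> length xs then n else 0)"
    using L3_loop[of "run L3 ?A xs 1" xs "length xs" n] r1 by auto
  then have h: "halted L3 (run L3 ?A xs (Suc t))" and
    v: "reg (run L3 ?A xs (Suc t)) 0 = (if 0 < n \<and> n \<le> length xs then n else 0)"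
    by (simp_all only: run_shift)
  show ?thesis using final_eq[OF h] v t(1) by (simp add: result_def)
qed

lemma F3_inj: "F3 a = F3 b \<Longrightarrow> a = b"
proof (rule ccontr)
  assume e: "F3 a = F3 b" and ne: "a \<noteq> b"
  show False
  proof (cases "a = 0")
    case True
    then have "b - 1 \<in> F3 a" by (simp add: F3_def)
    moreover have "b - 1 \<notin> F3 b" using ne True by (simp add: F3_def)
    ultimately show False using e by simp
  next
    case False
    then have "a - 1 \<notin> F3 a" by (simp add: F3_def)
    moreover have "a - 1 \<in> F3 b" using ne False by (simp add: F3_def)
    ultimately show False using e by simp
  qed
qed

lemma mi_inj: "(\<And>a b. F a = F b \<Longrightarrow> a = b) \<Longrightarrow> mi F (F n) = n"
  unfolding mi_def by (rule Least_equality) auto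

lemma restr_len[simp]: "length (restr f j) = j" by (simp add: restr_def)

lemma sum_bound: "(\<And>j. j \<le> n \<Longrightarrow> (g j::nat) \<le> 6 * j + 7) \<Longrightarrow> (\<Sum>j\<le>n. g j) \<le> (n + 1) * (6 * n + 7)"
proof -
  assume a: "\<And>j. j \<le> n \<Longrightarrow> g j \<le> 6 * j + 7"
  have "(\<Sum>j\<le>n. g j) \<le> (\<Sum>j\<le>n. 6 * n + 7)"
    by (rule sum_mono) (use a in force)
  also have "\<dots> = (n + 1) * (6 * n + 7)" by simp
  finally show ?thesis .
qed

lemma F3_PRT_O: "F3 \<in> PRT_O"
proof -
  let ?p = "[:8, 13, 6:] :: nat poly"
  have "conv_within F3 L3 (\<lambda>x. x \<in> F3 n) (restr f) (F3 n) (poly ?p (mi F3 (F3 n)))"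
    if "range f = F3 n" for n f
  proof -
    let ?A = "\<lambda>x. x \<in> F3 n"
    have mi: "mi F3 (F3 n) = n" using mi_inj F3_inj by blast
    have r: "j \<ge> n \<Longrightarrow> result L3 ?A (restr f j) = n" for j
      using L3_run[of n "restr f j"] by auto
    have s: "(\<Sum>j\<le>n. steps L3 ?A (restr f j)) \<le> (n + 1) * (6 * n + 7)"
    proof (rule sum_bound)
      fix j show "steps L3 ?A (restr f j) \<le> 6 * j + 7" using L3_run[of n "restr f j"] by simp
    qed
    have q: "(\<Sum>j\<le>n. length (queries L3 ?A (restr f j))) \<le> (\<Sum>j\<le>n. steps L3 ?A (restr f j))"
      by (rule sum_mono) (rule queries_le_steps)
    have pb: "(n + 1) * (6 * n + 7) < poly ?p n" by (simp add: algebra_simps)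
    show ?thesis unfolding conv_within_def mi
      apply (rule exI[of _ n])
      using L3_run r s q pb by auto
  qed
  then show ?thesis unfolding PRT_O_def using F3_ix by blast
qed

definition learns3 :: "(nat list \<Rightarrow> nat) \<Rightarrow> bool" where
  "learns3 h \<longleftrightarrow> (\<forall>n f. range f = F3 n \<longrightarrow>
      (\<exists>i. (\<forall>j\<ge>i. h (restr f j) = h (restr f i)) \<and> F3 (h (restr f i)) = F3 n))"

lemma restr_prefix: "j \<ge> length \<sigma> \<Longrightarrow> (\<forall>x < length \<sigma>. g x = \<sigma> ! x) \<Longrightarrow>
  restr g j = \<sigma> @ drop (length \<sigma>) (restr g j)"
proof -
  assume j: "j \<ge> length \<sigma>" and g: "\<forall>x < length \<sigma>. g x = \<sigma> ! x"
  have "take (length \<sigma>) (restr g j) = \<sigma>"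
    using j g by (auto simp: restr_def intro!: nth_equalityI)
  then show ?thesis by (metis append_take_drop_id)
qed

lemma gold_A: assumes lock: "\<forall>\<tau>. h (\<sigma> @ \<tau>) = 0" shows "\<not> learns3 h"
proof
  assume L: "learns3 h"
  obtain k where k: "k \<notin> set \<sigma>" using ex_new_if_finite[OF infinite_UNIV_nat, of "set \<sigma>"] by auto
  define e where "e y = (if y < k then y else Suc y)" for y
  define g where "g x = (if x < length \<sigma> then \<sigma> ! x else e (x - length \<sigma>))" for x
  have re: "range e = UNIV - {k}"
  proof
    show "range e \<subseteq> UNIV - {k}" by (auto simp: e_def)
    show "UNIV - {k} \<subseteq> range e"
    proof
      fix y assume "y \<in> UNIV - {k}"
      then have "y \<noteq> k" by simp
      show "y \<in> range e"
      proof (cases "y < k")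
        case True then show ?thesis by (metis e_def rangeI)
      next
        case False then have "e (y - 1) = y" using \<open>y \<noteq> k\<close> by (simp add: e_def)
        then show ?thesis by (metis rangeI)
      qed
    qed
  qed
  have rg: "range g = F3 (Suc k)"
  proof
    show "range g \<subseteq> F3 (Suc k)"
      using k re by (auto simp: g_def F3_def in_set_conv_nth)
    show "F3 (Suc k) \<subseteq> range g"
    proof
      fix y assume "y \<in> F3 (Suc k)"
      then have "y \<in> range e" using re by (simp add: F3_def)
      then obtain z where "y = e z" by auto
      then have "g (z + length \<sigma>) = y" by (simp add: g_def)
      then show "y \<in> range g" by (metis rangeI)
    qed
  qed
  obtain i where i: "\<forall>j\<ge>i. h (restr g j) = h (restr g i)" "F3 (h (restr g i)) = F3 (Suc k)"
    using L rg unfolding learns3_def by blast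
  let ?j = "max i (length \<sigma>)"
  have "restr g ?j = \<sigma> @ drop (length \<sigma>) (restr g ?j)"
    by (rule restr_prefix) (auto simp: g_def)
  then have "h (restr g ?j) = 0" using lock by metis
  moreover have "h (restr g ?j) = h (restr g i)" using i(1) by (meson max.cobounded1)
  ultimately have "h (restr g i) = 0" by simp
  then have "F3 0 = F3 (Suc k)" using i(2) by simp
  then have "(0::nat) = Suc k" using F3_inj by blast
  then show False by simp
qed

fun seqB :: "(nat list \<Rightarrow> nat list) \<Rightarrow> nat \<Rightarrow> nat list" where
  "seqB ext 0 = []"
| "seqB ext (Suc m) = (seqB ext m @ [m]) @ ext (seqB ext m @ [m])"

lemma seqB_prefix: "m \<le> m' \<Longrightarrow> prefix (seqB ext m) (seqB ext m')"
proof (induction m' )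
  case 0 then show ?case by simp
next
  case (Suc m')
  show ?case
  proof (cases "m = Suc m'")
    case True then show ?thesis by simp
  next
    case False
    then have "prefix (seqB ext m) (seqB ext m')" using Suc by simp
    then show ?thesis by (simp add: prefix_def) (metis append.assoc)
  qed
qed

lemma seqB_len: "m \<le> length (seqB ext m)"
  by (induction m) auto

lemma gold_B: assumes nl: "\<forall>\<sigma>. \<exists>\<tau>. h (\<sigma> @ \<tau>) \<noteq> 0" shows "\<not> learns3 h"
proof
  assume L: "learns3 h"
  define ext where "ext \<sigma> = (SOME \<tau>. h (\<sigma> @ \<tau>) \<noteq> 0)" for \<sigma>
  have ext: "h (\<sigma> @ ext \<sigma>) \<noteq> 0" for \<sigma>
  proof -
    have "\<exists>\<tau>. h (\<sigma> @ \<tau>) \<noteq> 0" using nl by blast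
    then show ?thesis unfolding ext_def by (rule someI_ex)
  qed
  let ?s = "seqB ext"
  define f where "f x = ?s (Suc x) ! x" for x
  have nthS: "x < length (?s m) \<Longrightarrow> f x = ?s m ! x" for x m
  proof -
    assume x: "x < length (?s m)"
    have x2: "x < length (?s (Suc x))" using seqB_len[of "Suc x" ext] by simp
    show ?thesis
    proof (cases "m \<le> Suc x")
      case True
      then obtain z where "?s (Suc x) = ?s m @ z" using seqB_prefix prefixE by metis
      then show ?thesis using x by (simp add: f_def nth_append)
    next
      case False
      then obtain z where z: "?s m = ?s (Suc x) @ z" using seqB_prefix prefixE
        by (metis nat_le_linear)
      have "?s m ! x = ?s (Suc x) ! x" using x2 z by (metis nth_append)
      then show ?thesis by (simp only: f_def)
    qed
  qed
  have rs: "restr f (length (?s m)) = ?s m" for m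
    using nthS by (auto simp: restr_def intro!: nth_equalityI)
  have rf: "range f = F3 0"
  proof -
    have "m \<in> range f" for m
    proof -
      have "m \<in> set (?s (Suc m))" by simp
      then obtain y where "y < length (?s (Suc m))" "?s (Suc m) ! y = m" by (metis in_set_conv_nth)
      then show ?thesis using nthS by (metis rangeI)
    qed
    then show ?thesis by (auto simp: F3_def)
  qed
  obtain i where i: "\<forall>j\<ge>i. h (restr f j) = h (restr f i)" "F3 (h (restr f i)) = F3 0"
    using L rf unfolding learns3_def by blast
  have "h (restr f i) = 0" using i(2) F3_inj by blast
  moreover have "h (restr f (length (?s (Suc i)))) \<noteq> 0"
  proof -
    have "restr f (length (?s (Suc i))) = (?s i @ [i]) @ ext (?s i @ [i])"
      using rs[of "Suc i"] by (simp only: seqB.simps)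
    then show ?thesis using ext[of "?s i @ [i]"] by simp
  qed
  moreover have "length (?s (Suc i)) \<ge> i" using seqB_len[of "Suc i" ext] by simp
  ultimately show False using i(1) by metis
qed

lemma gold: "\<not> learns3 h"
  using gold_A gold_B by blast

lemma F3_not_T: "F3 \<notin> PRT_T"
proof
  assume "F3 \<in> PRT_T"
  then obtain M T p where
    c: "\<forall>n f. range f = F3 n \<longrightarrow> conv_within F3 M no_oracle (\<lambda>j. outlist T no_oracle (restr f j)) (F3 n)
          (poly p (mi F3 (F3 n)))"
    unfolding PRT_T_def by blast
  have "learns3 (\<lambda>\<sigma>. result M no_oracle (outlist T no_oracle \<sigma>))"
    unfolding learns3_def
  proof (intro allI impI)
    fix n and f :: "nat \<Rightarrow> nat" assume "range f = F3 n"
    then show "\<exists>i. (\<forall>j\<ge>i. result M no_oracle (outlist T no_oracle (restr f j)) = result M no_oracle (outlist T no_oracle (restr f i))) \<and>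
       F3 (result M no_oracle (outlist T no_oracle (restr f i))) = F3 n"
      using c unfolding conv_within_def by blast
  qed
  then show False using gold by blast
qed

definition A4 :: "nat \<Rightarrow> nat" where "A4 n = ((\<lambda>a. 2 ^ a) ^^ n) 1"

lemma A4_0[simp]: "A4 0 = 1" by (simp add: A4_def)
lemma A4_Suc[simp]: "A4 (Suc n) = 2 ^ A4 n" by (simp add: A4_def)

lemma A4_gt: "n < A4 n"
proof (induction n)
  case (Suc n)
  then have "Suc n \<le> A4 n" by simp
  then show ?case by (simp add: le_less_trans[OF _ less_exp])
qed simp

lemma A4_mono_Suc: "A4 n < A4 (Suc n)" by (simp add: less_exp)

lemma A4_smono: "strict_mono A4"
  unfolding strict_mono_Suc_iff using A4_mono_Suc by blast

lemma A4_inj: "A4 a = A4 b \<Longrightarrow> a = b"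
  using A4_smono strict_mono_eq by blast

lemma dbl_loop:
  assumes P: "P ! p = Jz c (Suc (Suc (Suc (Suc p))))" "P ! Suc p = Add v v v" "P ! Suc (Suc p) = Dec c" "P ! Suc (Suc (Suc p)) = Jz z p"
     "Suc (Suc (Suc p)) < length P" "c \<noteq> v" "z \<noteq> c" "z \<noteq> v"
  shows "\<And>cf. pc cf = p \<Longrightarrow> reg cf z = 0 \<Longrightarrow> reg cf c = k \<Longrightarrow>
    \<exists>t. pc ((step P Or xs ^^ t) cf) = Suc (Suc (Suc (Suc p))) \<and> reg ((step P Or xs ^^ t) cf) = (reg cf)(c := 0, v := reg cf v * 2 ^ k)
     \<and> outp ((step P Or xs ^^ t) cf) = outp cf"
proof (induction k)
  case 0
  show ?case
    apply (rule exI[of _ "Suc 0"])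
    using 0 P by (auto simp: fpow_Suc step_app fun_eq_iff)
next
  case (Suc k)
  let ?c = "(step P Or xs ^^ Suc (Suc (Suc (Suc 0)))) cf"
  have e: "pc ?c = p \<and> reg ?c z = 0 \<and> reg ?c c = k \<and> reg ?c = (reg cf)(c := k, v := reg cf v * 2) \<and> outp ?c = outp cf"
    using Suc.prems P by (auto simp: fpow_Suc step_app fun_eq_iff)
  have "\<exists>t. pc ((step P Or xs ^^ t) ?c) = Suc (Suc (Suc (Suc p))) \<and> reg ((step P Or xs ^^ t) ?c) = (reg ?c)(c := 0, v := reg ?c v * 2 ^ k)
     \<and> outp ((step P Or xs ^^ t) ?c) = outp ?c"
    apply (rule Suc.IH) using e by blast+
  then obtain t where t: "pc ((step P Or xs ^^ t) ?c) = Suc (Suc (Suc (Suc p))) \<and> reg ((step P Or xs ^^ t) ?c) = (reg ?c)(c := 0, v := reg ?c v * 2 ^ k)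
     \<and> outp ((step P Or xs ^^ t) ?c) = outp ?c" by blast
  have 1: "(step P Or xs ^^ (t + Suc (Suc (Suc (Suc 0))))) cf = (step P Or xs ^^ t) ?c"
    by (simp only: funpow_add o_apply)
  have 2: "reg ?c v = reg cf v * 2" using e P(6) by simp
  have 3: "(reg ?c)(c := 0, v := reg ?c v * 2 ^ k) = (reg cf)(c := 0, v := reg cf v * 2 ^ Suc k)"
    unfolding 2 using e by (simp add: fun_eq_iff)
  show ?case
    apply (rule exI[of _ "t + Suc (Suc (Suc (Suc 0)))"])
    unfolding 1 using t e 3 P(6) by (auto simp: fun_eq_iff)
qed

lemma fp_comp: "(f ^^ t2) ((f ^^ t1) c) = (f ^^ (t2 + t1)) c"
  by (simp add: funpow_add)

definition P4 :: prog where
  "P4 = [Rd 1 0, Inc 2, Rd 3 2, Inc 4, Jz 1 15, Add 5 4 0, Sub 6 6 6, Inc 6, Jz 5 12, Add 6 6 6,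
         Dec 5, Jz 0 8, Add 4 6 0, Dec 1, Jz 0 4, Sub 7 4 3, Sub 8 3 4, Add 7 7 8, Jz 7 20, Jz 0 19]"

lemma P4_tail3: "pc d = 12 \<Longrightarrow> reg d 0 = 0 \<Longrightarrow>
  pc ((step P4 Q xs ^^ 3) d) = 4 \<and> reg ((step P4 Q xs ^^ 3) d) 0 = 0 \<and> reg ((step P4 Q xs ^^ 3) d) 1 = reg d 1 - 1
  \<and> reg ((step P4 Q xs ^^ 3) d) 4 = reg d 6 \<and> reg ((step P4 Q xs ^^ 3) d) 3 = reg d 3"
  by (simp add: numeral_3_eq_3 fpow_Suc step_app P4_def)

lemma P4_outer: "\<And>cf. pc cf = 4 \<Longrightarrow> reg cf 0 = 0 \<Longrightarrow> reg cf 1 = k \<Longrightarrow>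
  \<exists>t. pc ((step P4 Q xs ^^ t) cf) = 15 \<and> reg ((step P4 Q xs ^^ t) cf) 4 = ((\<lambda>a. 2 ^ a) ^^ k) (reg cf 4)
      \<and> reg ((step P4 Q xs ^^ t) cf) 3 = reg cf 3 \<and> reg ((step P4 Q xs ^^ t) cf) 0 = 0"
proof (induction k)
  case 0
  show ?case
    apply (rule exI[of _ "Suc 0"])
    using 0 by (simp add: fpow_Suc step_app P4_def)
next
  case (Suc k)
  let ?s = "step P4 Q xs"
  let ?c1 = "(?s ^^ 4) cf"
  have c1: "pc ?c1 = 8 \<and> reg ?c1 0 = 0 \<and> reg ?c1 5 = reg cf 4 \<and> reg ?c1 6 = 1 \<and> reg ?c1 1 = Suc k
      \<and> reg ?c1 3 = reg cf 3"
    using Suc.prems by (simp add: numeral_eq_Suc fpow_Suc step_app P4_def)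
  obtain t1 where t1: "pc ((?s ^^ t1) ?c1) = 12" "reg ((?s ^^ t1) ?c1) = (reg ?c1)(5 := 0, 6 := reg ?c1 6 * 2 ^ reg cf 4)"
    using dbl_loop[where P=P4 and p=8 and c=5 and v=6 and z=0 and Or=Q and xs=xs and k="reg cf 4" and cf="?c1"] c1 by (auto simp: P4_def)
  let ?c2 = "(?s ^^ 3) ((?s ^^ t1) ?c1)"
  have c2: "pc ?c2 = 4 \<and> reg ?c2 0 = 0 \<and> reg ?c2 1 = k \<and> reg ?c2 4 = 2 ^ reg cf 4 \<and> reg ?c2 3 = reg cf 3"
  proof -
    have "reg ((?s ^^ t1) ?c1) 0 = 0" "reg ((?s ^^ t1) ?c1) 1 = Suc k" "reg ((?s ^^ t1) ?c1) 6 = 2 ^ reg cf 4"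
      "reg ((?s ^^ t1) ?c1) 3 = reg cf 3"
      using t1(2) c1 by simp_all
    then show ?thesis using P4_tail3[of "(?s ^^ t1) ?c1" Q xs] t1(1) by simp
  qed
  have "\<exists>t2. pc ((?s ^^ t2) ?c2) = 15 \<and> reg ((?s ^^ t2) ?c2) 4 = ((\<lambda>a. 2 ^ a) ^^ k) (reg ?c2 4)
      \<and> reg ((?s ^^ t2) ?c2) 3 = reg ?c2 3 \<and> reg ((?s ^^ t2) ?c2) 0 = 0"
    apply (rule Suc.IH) using c2 by simp_all
  then obtain t2 where t2: "pc ((?s ^^ t2) ?c2) = 15 \<and> reg ((?s ^^ t2) ?c2) 4 = ((\<lambda>a. 2 ^ a) ^^ k) (reg ?c2 4)
      \<and> reg ((?s ^^ t2) ?c2) 3 = reg ?c2 3 \<and> reg ((?s ^^ t2) ?c2) 0 = 0" by blast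
  have eq: "(?s ^^ (t2 + 3 + t1 + 4)) cf = (?s ^^ t2) ?c2" by (simp only: funpow_add o_apply)
  show ?case
    apply (rule exI[of _ "t2 + 3 + t1 + 4"])
    unfolding eq using t2 c2 by (simp add: funpow_Suc_right del: funpow.simps)
qed

lemma fix_not_defined: assumes "run P Q xs t1 = c" "step P Q xs c = c" "\<not> halted P c"
  shows "\<not> defined P Q xs"
proof
  assume "defined P Q xs"
  then obtain t0 where h: "halted P (run P Q xs t0)" unfolding defined_def by blast
  have fx: "run P Q xs (d + t1) = c" for d
  proof (induction d)
    case (Suc d) then show ?case using assms(2) by (simp add: run_Suc)
  qed (use assms(1) in simp)
  show False
  proof (cases "t0 \<le> t1")
    case True then show ?thesis using run_halted_mono[OF h True] assms h by simp
  next
    case False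
    then have "t0 = (t0 - t1) + t1" by simp
    then show ?thesis using fx[of "t0 - t1"] h assms(3) by metis
  qed
qed

lemma P4_correct: "defined P4 Q [n, x] \<longleftrightarrow> x = A4 n"
proof -
  let ?s = "step P4 Q [n, x]"
  let ?c0 = "run P4 Q [n, x] 4"
  have c0: "pc ?c0 = 4 \<and> reg ?c0 0 = 0 \<and> reg ?c0 1 = n \<and> reg ?c0 3 = x \<and> reg ?c0 4 = 1"
    by (simp add: numeral_eq_Suc run_Suc step_app P4_def init_cfg_def)
  obtain t where t: "pc ((?s ^^ t) ?c0) = 15 \<and> reg ((?s ^^ t) ?c0) 4 = A4 n
      \<and> reg ((?s ^^ t) ?c0) 3 = x \<and> reg ((?s ^^ t) ?c0) 0 = 0"
    using P4_outer[of ?c0 n Q "[n, x]"] c0 by (auto simp: A4_def)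
  let ?c1 = "run P4 Q [n, x] (t + 4)"
  have c1: "pc ?c1 = 15 \<and> reg ?c1 4 = A4 n \<and> reg ?c1 3 = x \<and> reg ?c1 0 = 0"
    using t by (simp add: run_plus)
  have tail: "\<And>c. pc c = 15 \<Longrightarrow> reg c 4 = A4 n \<Longrightarrow> reg c 3 = x \<Longrightarrow> reg c 0 = 0 \<Longrightarrow>
     (x = A4 n \<longrightarrow> halted P4 ((?s ^^ 4) c)) \<and> (x \<noteq> A4 n \<longrightarrow> pc ((?s ^^ 4) c) = 19 \<and> reg ((?s ^^ 4) c) 0 = 0)"
    by (simp add: numeral_eq_Suc fpow_Suc step_app P4_def halted_def)
  have eq: "run P4 Q [n, x] (4 + (t + 4)) = (?s ^^ 4) ?c1" by (simp only: run_plus)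
  show ?thesis
  proof (cases "x = A4 n")
    case True
    have "halted P4 (run P4 Q [n, x] (4 + (t + 4)))"
      using c1 True tail eq by metis
    then show ?thesis using final_eq True by blast
  next
    case False
    let ?c2 = "run P4 Q [n, x] (4 + (t + 4))"
    have c2: "pc ?c2 = 19 \<and> reg ?c2 0 = 0"
      using c1 False tail eq by metis
    have "\<not> defined P4 Q [n, x]"
      apply (rule fix_not_defined[of P4 Q "[n,x]" "4 + (t + 4)" ?c2])
      using c2 by (simp_all add: step_app P4_def halted_def)
    then show ?thesis using False by simp
  qed
qed

definition F4 :: "nat \<Rightarrow> nat set" where "F4 n = {A4 n}"

lemma F4_ix: "indexed_family F4"
  unfolding indexed_family_def F4_def using P4_correct by auto

definition T4 :: prog where
  "T4 = [Len 1, Jz 1 21, Rd 2 0, Inc 3, Sub 5 2 3, Jz 5 16, Add 6 3 0, Sub 7 7 7, Inc 7, Jz 6 13,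
         Add 7 7 7, Dec 6, Jz 0 9, Add 3 7 0, Inc 4, Jz 0 4, Inc 4, Jz 4 21, Out 2, Dec 4, Jz 0 17]"

definition g4 :: "nat \<Rightarrow> nat" where "g4 x = (LEAST k. x \<le> A4 k)"

lemma g4_le: "x \<le> A4 (g4 x)"
  unfolding g4_def by (rule LeastI[of _ x]) (use A4_gt in \<open>simp add: less_imp_le\<close>)

lemma g4_less: "k < g4 x \<Longrightarrow> \<not> x \<le> A4 k"
  unfolding g4_def by (rule not_less_Least)

lemma g4_A4: "g4 (A4 n) = n"
  unfolding g4_def
proof (rule Least_equality)
  show "A4 n \<le> A4 n" by simp
  show "\<And>y. A4 n \<le> A4 y \<Longrightarrow> n \<le> y" using A4_smono strict_mono_less_eq by blast
qed

lemma T4_seg1: "pc d = 4 \<Longrightarrow> reg d 0 = 0 \<Longrightarrow> \<not> reg d 2 \<le> reg d 3 \<Longrightarrow>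
   pc ((step T4 Q xs ^^ 5) d) = 9 \<and> reg ((step T4 Q xs ^^ 5) d) 0 = 0 \<and> reg ((step T4 Q xs ^^ 5) d) 6 = reg d 3
   \<and> reg ((step T4 Q xs ^^ 5) d) 7 = 1 \<and> reg ((step T4 Q xs ^^ 5) d) 2 = reg d 2 \<and> reg ((step T4 Q xs ^^ 5) d) 4 = reg d 4
   \<and> outp ((step T4 Q xs ^^ 5) d) = outp d"
  by (simp add: eval_nat_numeral fpow_Suc step_app T4_def)

lemma T4_seg2: "pc d = 13 \<Longrightarrow> reg d 0 = 0 \<Longrightarrow>
   pc ((step T4 Q xs ^^ 3) d) = 4 \<and> reg ((step T4 Q xs ^^ 3) d) 0 = 0 \<and> reg ((step T4 Q xs ^^ 3) d) 3 = reg d 7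
   \<and> reg ((step T4 Q xs ^^ 3) d) 2 = reg d 2 \<and> reg ((step T4 Q xs ^^ 3) d) 4 = Suc (reg d 4)
   \<and> outp ((step T4 Q xs ^^ 3) d) = outp d"
  by (simp add: eval_nat_numeral fpow_Suc step_app T4_def)

lemma T4_seg0: "pc d = 4 \<Longrightarrow> reg d 2 \<le> reg d 3 \<Longrightarrow>
   pc ((step T4 Q xs ^^ 2) d) = 16 \<and> reg ((step T4 Q xs ^^ 2) d) 0 = reg d 0 \<and> reg ((step T4 Q xs ^^ 2) d) 2 = reg d 2
   \<and> reg ((step T4 Q xs ^^ 2) d) 4 = reg d 4 \<and> outp ((step T4 Q xs ^^ 2) d) = outp d"
  by (simp add: eval_nat_numeral fpow_Suc step_app T4_def)

lemma T4_outer: "\<And>d k. pc d = 4 \<Longrightarrow> reg d 0 = 0 \<Longrightarrow> reg d 2 = x \<Longrightarrow> reg d 4 = k \<Longrightarrow> reg d 3 = A4 k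
   \<Longrightarrow> k + e = g4 x \<Longrightarrow>
   \<exists>t. pc ((step T4 Q xs ^^ t) d) = 16 \<and> reg ((step T4 Q xs ^^ t) d) 0 = 0 \<and> reg ((step T4 Q xs ^^ t) d) 2 = x
     \<and> reg ((step T4 Q xs ^^ t) d) 4 = g4 x \<and> outp ((step T4 Q xs ^^ t) d) = outp d"
proof (induction e)
  case 0
  then have "reg d 2 \<le> reg d 3" using g4_le by simp
  then show ?case using T4_seg0[of d Q xs] 0 by (intro exI[of _ 2]) simp
next
  case (Suc e)
  let ?s = "step T4 Q xs"
  have nl: "\<not> reg d 2 \<le> reg d 3" using g4_less[of k x] Suc.prems by simp
  let ?d1 = "(?s ^^ 5) d"
  have d1: "pc ?d1 = 9 \<and> reg ?d1 0 = 0 \<and> reg ?d1 6 = A4 k \<and> reg ?d1 7 = 1 \<and> reg ?d1 2 = x \<and> reg ?d1 4 = k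
     \<and> outp ?d1 = outp d"
    using T4_seg1[of d Q xs] nl Suc.prems by simp
  have "\<exists>t. pc ((?s ^^ t) ?d1) = 13 \<and> reg ((?s ^^ t) ?d1) = (reg ?d1)(6 := 0, 7 := reg ?d1 7 * 2 ^ A4 k)
     \<and> outp ((?s ^^ t) ?d1) = outp ?d1"
    by (rule dbl_loop[where P=T4 and p=9 and c=6 and v=7 and z=0, simplified])
       (use d1 in \<open>simp_all add: T4_def\<close>)
  then obtain t1 where t1: "pc ((?s ^^ t1) ?d1) = 13" "reg ((?s ^^ t1) ?d1) = (reg ?d1)(6 := 0, 7 := reg ?d1 7 * 2 ^ A4 k)"
     "outp ((?s ^^ t1) ?d1) = outp ?d1" by blast
  let ?d2 = "(?s ^^ 3) ((?s ^^ t1) ?d1)"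
  have d2: "pc ?d2 = 4 \<and> reg ?d2 0 = 0 \<and> reg ?d2 2 = x \<and> reg ?d2 4 = Suc k \<and> reg ?d2 3 = A4 (Suc k)
      \<and> outp ?d2 = outp d"
  proof -
    have "reg ((?s ^^ t1) ?d1) 0 = 0" "reg ((?s ^^ t1) ?d1) 7 = A4 (Suc k)" "reg ((?s ^^ t1) ?d1) 2 = x"
      "reg ((?s ^^ t1) ?d1) 4 = k"
      using t1(2) d1 by simp_all
    then show ?thesis using T4_seg2[of "(?s ^^ t1) ?d1" Q xs] t1(1,3) d1 by simp
  qed
  have "\<exists>t. pc ((?s ^^ t) ?d2) = 16 \<and> reg ((?s ^^ t) ?d2) 0 = 0 \<and> reg ((?s ^^ t) ?d2) 2 = x
     \<and> reg ((?s ^^ t) ?d2) 4 = g4 x \<and> outp ((?s ^^ t) ?d2) = outp ?d2"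
    apply (rule Suc.IH[of _ "Suc k"]) using d2 Suc.prems by simp_all
  then obtain t2 where t2: "pc ((?s ^^ t2) ?d2) = 16 \<and> reg ((?s ^^ t2) ?d2) 0 = 0 \<and> reg ((?s ^^ t2) ?d2) 2 = x
     \<and> reg ((?s ^^ t2) ?d2) 4 = g4 x \<and> outp ((?s ^^ t2) ?d2) = outp ?d2" by blast
  have eq: "(?s ^^ (t2 + 3 + t1 + 5)) d = (?s ^^ t2) ?d2" by (simp only: funpow_add o_apply)
  show ?case
    apply (rule exI[of _ "t2 + 3 + t1 + 5"])
    unfolding eq using t2 d2 by simp
qed

lemma T4_seg3: "pc d = 17 \<Longrightarrow> reg d 0 = 0 \<Longrightarrow> reg d 4 = Suc m \<Longrightarrow>
   pc ((step T4 Q xs ^^ 4) d) = 17 \<and> reg ((step T4 Q xs ^^ 4) d) 0 = 0 \<and> reg ((step T4 Q xs ^^ 4) d) 4 = m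
   \<and> reg ((step T4 Q xs ^^ 4) d) 2 = reg d 2 \<and> outp ((step T4 Q xs ^^ 4) d) = outp d @ [reg d 2]"
  by (simp add: eval_nat_numeral fpow_Suc step_app T4_def)

lemma T4_out: "\<And>d. pc d = 17 \<Longrightarrow> reg d 0 = 0 \<Longrightarrow> reg d 4 = m \<Longrightarrow>
   \<exists>t. halted T4 ((step T4 Q xs ^^ t) d) \<and> outp ((step T4 Q xs ^^ t) d) = outp d @ replicate m (reg d 2)"
proof (induction m)
  case 0
  show ?case
    apply (rule exI[of _ "Suc 0"])
    using 0 by (simp add: fpow_Suc step_app T4_def halted_def)
next
  case (Suc m)
  let ?s = "step T4 Q xs"
  let ?d1 = "(?s ^^ 4) d"
  have d1: "pc ?d1 = 17 \<and> reg ?d1 0 = 0 \<and> reg ?d1 4 = m \<and> reg ?d1 2 = reg d 2 \<and> outp ?d1 = outp d @ [reg d 2]"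
    using T4_seg3[of d m Q xs] Suc.prems by simp
  have "\<exists>t. halted T4 ((?s ^^ t) ?d1) \<and> outp ((?s ^^ t) ?d1) = outp ?d1 @ replicate m (reg ?d1 2)"
    apply (rule Suc.IH) using d1 by simp_all
  then obtain t where t: "halted T4 ((?s ^^ t) ?d1) \<and> outp ((?s ^^ t) ?d1) = outp ?d1 @ replicate m (reg ?d1 2)"
    by blast
  have eq: "(?s ^^ (t + 4)) d = (?s ^^ t) ?d1" by (simp only: funpow_add o_apply)
  show ?case
    apply (rule exI[of _ "t + 4"])
    unfolding eq using t d1 by (simp add: replicate_append_same)
qed

lemma T4_empty: "halted T4 (run T4 Q [] 2) \<and> outp (run T4 Q [] 2) = []"
  by (simp add: eval_nat_numeral run_Suc step_app T4_def halted_def init_cfg_def)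

lemma T4_start: "\<sigma> \<noteq> [] \<Longrightarrow> pc (run T4 Q \<sigma> 4) = 4 \<and> reg (run T4 Q \<sigma> 4) 0 = 0 \<and> reg (run T4 Q \<sigma> 4) 2 = hd \<sigma>
   \<and> reg (run T4 Q \<sigma> 4) 4 = 0 \<and> reg (run T4 Q \<sigma> 4) 3 = A4 0 \<and> outp (run T4 Q \<sigma> 4) = []"
  by (cases \<sigma>) (simp_all add: eval_nat_numeral run_Suc step_app T4_def init_cfg_def)

lemma T4_inc: "pc d = 16 \<Longrightarrow> pc (step T4 Q xs d) = 17 \<and> reg (step T4 Q xs d) 0 = reg d 0 \<and>
  reg (step T4 Q xs d) 2 = reg d 2 \<and> reg (step T4 Q xs d) 4 = Suc (reg d 4) \<and> outp (step T4 Q xs d) = outp d"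
  by (simp add: step_app T4_def)

lemma T4_correct: "defined T4 Q \<sigma> \<and> outlist T4 Q \<sigma> = (if \<sigma> = [] then [] else replicate (Suc (g4 (hd \<sigma>))) (hd \<sigma>))"
proof (cases "\<sigma> = []")
  case True
  then show ?thesis using T4_empty final_eq[of T4 Q "[]" 2] by (simp add: outlist_def)
next
  case False
  let ?s = "step T4 Q \<sigma>"
  let ?x = "hd \<sigma>"
  have st: "pc (run T4 Q \<sigma> 4) = 4 \<and> reg (run T4 Q \<sigma> 4) 0 = 0 \<and> reg (run T4 Q \<sigma> 4) 2 = ?x
   \<and> reg (run T4 Q \<sigma> 4) 4 = 0 \<and> reg (run T4 Q \<sigma> 4) 3 = A4 0 \<and> outp (run T4 Q \<sigma> 4) = []"
    using T4_start[OF False] by blast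
  have "\<exists>t. pc ((?s ^^ t) (run T4 Q \<sigma> 4)) = 16 \<and> reg ((?s ^^ t) (run T4 Q \<sigma> 4)) 0 = 0
     \<and> reg ((?s ^^ t) (run T4 Q \<sigma> 4)) 2 = ?x
     \<and> reg ((?s ^^ t) (run T4 Q \<sigma> 4)) 4 = g4 ?x \<and> outp ((?s ^^ t) (run T4 Q \<sigma> 4)) = outp (run T4 Q \<sigma> 4)"
    apply (rule T4_outer[of _ ?x 0 "g4 ?x"]) using st by simp_all
  then obtain t1 where t1: "pc (run T4 Q \<sigma> (t1 + 4)) = 16 \<and> reg (run T4 Q \<sigma> (t1 + 4)) 0 = 0
     \<and> reg (run T4 Q \<sigma> (t1 + 4)) 2 = ?x
     \<and> reg (run T4 Q \<sigma> (t1 + 4)) 4 = g4 ?x \<and> outp (run T4 Q \<sigma> (t1 + 4)) = []"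
    using st by (metis run_plus)
  let ?d = "run T4 Q \<sigma> (Suc (t1 + 4))"
  have d: "pc ?d = 17 \<and> reg ?d 0 = 0 \<and> reg ?d 2 = ?x \<and> reg ?d 4 = Suc (g4 ?x) \<and> outp ?d = []"
  proof -
    have eqd: "?d = step T4 Q \<sigma> (run T4 Q \<sigma> (t1 + 4))" by (rule run_Suc)
    show ?thesis unfolding eqd using T4_inc[of "run T4 Q \<sigma> (t1 + 4)" Q \<sigma>] t1 by simp
  qed
  have "\<exists>t. halted T4 ((?s ^^ t) ?d) \<and> outp ((?s ^^ t) ?d) = outp ?d @ replicate (Suc (g4 ?x)) (reg ?d 2)"
    apply (rule T4_out) using d by simp_all
  then obtain t2 where H: "halted T4 (run T4 Q \<sigma> (t2 + Suc (t1 + 4))) \<and> outp (run T4 Q \<sigma> (t2 + Suc (t1 + 4))) = replicate (Suc (g4 ?x)) ?x"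
    using d by (metis run_plus append_Nil)
  then show ?thesis using final_eq[OF conjunct1[OF H]] conjunct2[OF H] False by (simp add: outlist_def)
qed

lemma teacher_T4: "teacher T4"
  unfolding teacher_def
proof (intro conjI allI impI)
  fix \<sigma> show "defined T4 no_oracle \<sigma>" using T4_correct by blast
next
  fix \<sigma> \<tau> :: "nat list" assume p: "prefix \<sigma> \<tau>"
  show "prefix (outlist T4 no_oracle \<sigma>) (outlist T4 no_oracle \<tau>)"
  proof (cases "\<sigma> = []")
    case True then show ?thesis using T4_correct by simp
  next
    case False
    then have "\<tau> \<noteq> [] \<and> hd \<tau> = hd \<sigma>" using p by (metis prefix_Nil prefix_def hd_append2)
    then show ?thesis using T4_correct False by simp
  qed
next
  fix \<sigma> :: "nat list" show "set (outlist T4 no_oracle \<sigma>) \<subseteq> set \<sigma>"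
    using T4_correct[of no_oracle \<sigma>] by (auto simp: hd_in_set)
qed

definition M4 :: prog where "M4 = [Len 0, Dec 0]"

lemma M4_run: "defined M4 Q ys \<and> steps M4 Q ys \<le> 2 \<and> result M4 Q ys = length ys - 1 \<and> queries M4 Q ys = []"
proof -
  have h: "halted M4 (run M4 Q ys 2)" and r: "reg (run M4 Q ys 2) 0 = length ys - 1" "trans (run M4 Q ys 2) = []"
    by (simp_all add: eval_nat_numeral run_Suc step_app M4_def halted_def init_cfg_def)
  show ?thesis using final_eq[OF h] r by (simp add: result_def queries_def)
qed

lemma F4_inj: "F4 a = F4 b \<Longrightarrow> a = b"
  unfolding F4_def using A4_inj by simp

lemma mi_inj4: "(\<And>a b. F a = F b \<Longrightarrow> a = b) \<Longrightarrow> mi F (F n) = n"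
  unfolding mi_def by (rule Least_equality) auto

lemma F4_PRT_T: "F4 \<in> PRT_T"
proof -
  let ?p = "[:5:] :: nat poly"
  have "conv_within F4 M4 no_oracle (\<lambda>j. outlist T4 no_oracle (restr f j)) (F4 n) (poly ?p (mi F4 (F4 n)))"
    if rf: "range f = F4 n" for n f
  proof -
    have fj: "f j = A4 n" for j using rf unfolding F4_def by auto
    have out: "j \<ge> 1 \<Longrightarrow> outlist T4 no_oracle (restr f j) = replicate (Suc n) (A4 n)" for j
    proof -
      assume "j \<ge> 1"
      then have "restr f j \<noteq> [] \<and> hd (restr f j) = A4 n"
        by (cases j) (auto simp: restr_def fj upt_rec)
      then show ?thesis using T4_correct g4_A4 by simp
    qed
    have r: "j \<ge> 1 \<Longrightarrow> result M4 no_oracle (outlist T4 no_oracle (restr f j)) = n" for j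
      using out M4_run by simp
    have s: "(\<Sum>j\<le>1. steps M4 no_oracle (outlist T4 no_oracle (restr f j))) \<le> 4"
    proof -
      have a: "steps M4 no_oracle ys \<le> 2" for ys using M4_run by blast
      show ?thesis using a[of "outlist T4 no_oracle (restr f 0)"] a[of "outlist T4 no_oracle (restr f 1)"]
        by simp
    qed
    show ?thesis unfolding conv_within_def
      apply (rule exI[of _ 1])
      using M4_run r s F4_inj by (auto simp: mi_inj4[OF F4_inj])
  qed
  then show ?thesis unfolding PRT_T_def using F4_ix teacher_T4 by blast
qed

type_synonym av = "nat \<times> int"

fun adec :: "av \<Rightarrow> av" where
  "adec (a, b) = (if 0 < a then (a, b - 1) else (0, max 0 (b - 1)))"

fun asub :: "av \<Rightarrow> av \<Rightarrow> av" where
  "asub (a1, b1) (a2, b2) = (if a2 < a1 then (a1 - a2, b1 - b2) else if a1 < a2 then (0, 0) else (0, max 0 (b1 - b2)))"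

definition astep :: "prog \<Rightarrow> nat \<Rightarrow> nat \<times> (nat \<Rightarrow> av) \<Rightarrow> nat \<times> (nat \<Rightarrow> av)" where
  "astep P j pr = (let p = fst pr; G = snd pr in
   (if length P \<le> p then (p, G) else case P ! p of
     Inc r \<Rightarrow> (Suc p, G(r := (fst (G r), snd (G r) + 1)))
   | Dec r \<Rightarrow> (Suc p, G(r := adec (G r)))
   | Add r s t \<Rightarrow> (Suc p, G(r := (fst (G s) + fst (G t), snd (G s) + snd (G t))))
   | Sub r s t \<Rightarrow> (Suc p, G(r := asub (G s) (G t)))
   | Jz r l \<Rightarrow> (if G r = (0, 0) then l else Suc p, G)
   | Len r \<Rightarrow> (Suc p, G(r := (0, int j)))
   | Rd r s \<Rightarrow> (Suc p, G(r := (if fst (G s) = 0 \<and> snd (G s) < int j then (1, 0) else (0, 0))))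
   | Out r \<Rightarrow> (Suc p, G)
   | Qry r s \<Rightarrow> (Suc p, G(r := (if G s = (1, 0) then (0, 1) else (0, 0))))))"

definition Bd :: "nat \<Rightarrow> nat \<Rightarrow> int" where "Bd j t = 2 ^ t * (int j + 1)"

definition Inv :: "nat \<Rightarrow> nat \<Rightarrow> (nat \<Rightarrow> av) \<Rightarrow> bool" where
  "Inv j t G \<longleftrightarrow> (\<forall>r. fst (G r) \<le> 2 ^ t \<and> \<bar>snd (G r)\<bar> \<le> Bd j t \<and> (fst (G r) = 0 \<longrightarrow> 0 \<le> snd (G r)))"

lemma Bd_ge1: "1 \<le> Bd j t"
  unfolding Bd_def using mult_mono[of 1 "2^t" 1 "int j + 1::int"] by simp

lemma Bd_Suc: "Bd j (Suc t) = 2 * Bd j t" unfolding Bd_def by simp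

lemma Bd_j: "int j < Bd j t"
proof -
  have "(1::int) \<le> 2 ^ t" by simp
  then have "int j + 1 \<le> 2 ^ t * (int j + 1)" using mult_right_mono[of 1 "2^t" "int j + 1::int"] by simp
  then show ?thesis unfolding Bd_def by linarith
qed

lemma inv_step: assumes "Inv j t G" shows "Inv j (Suc t) (snd (astep P j (p, G)))"
proof -
  have B1: "1 \<le> Bd j t" by (rule Bd_ge1)
  have Bj: "int j < Bd j t" by (rule Bd_j)
  have i: "\<And>r. fst (G r) \<le> 2 ^ t" "\<And>r. \<bar>snd (G r)\<bar> \<le> Bd j t" "\<And>r. fst (G r) = 0 \<Longrightarrow> 0 \<le> snd (G r)"
    using assms unfolding Inv_def by auto
  have pw: "(1::nat) \<le> 2 ^ t" by simp
  have gen0: "Inv j (Suc t) G"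
    unfolding Inv_def
  proof
    fix r
    have "fst (G r) \<le> 2 ^ Suc t" using i(1)[of r] by (simp add: le_trans[OF _ le_add1])
    moreover have "\<bar>snd (G r)\<bar> \<le> Bd j (Suc t)" using i(2)[of r] B1 unfolding Bd_Suc by linarith
    ultimately show "fst (G r) \<le> 2 ^ Suc t \<and> \<bar>snd (G r)\<bar> \<le> Bd j (Suc t) \<and> (fst (G r) = 0 \<longrightarrow> 0 \<le> snd (G r))"
      using i(3)[of r] by blast
  qed
  have gen: "Inv j (Suc t) (G(r := v))" if "fst v \<le> 2 ^ Suc t" "\<bar>snd v\<bar> \<le> Bd j (Suc t)" "fst v = 0 \<longrightarrow> 0 \<le> snd v" for r v
    using that gen0 unfolding Inv_def by auto
  show ?thesis
  proof (cases "length P \<le> p")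
    case True then show ?thesis using gen0 by (simp add: astep_def)
  next
    case False
    show ?thesis
    proof (cases "P ! p")
      case (Inc r) then show ?thesis using False i[of r] B1
        by (auto simp: astep_def Bd_Suc intro!: gen)
    next
      case (Dec r) then show ?thesis using False i[of r] B1
        by (cases "G r") (auto simp: astep_def Bd_Suc intro!: gen)
    next
      case (Add r s u) then show ?thesis using False i[of s] i[of u] B1
        by (auto simp: astep_def Bd_Suc intro!: gen)
    next
      case (Sub r s u) then show ?thesis using False i[of s] i[of u] B1
        by (cases "G s"; cases "G u") (auto simp: astep_def Bd_Suc intro!: gen)
    next
      case (Jz r l) then show ?thesis using False gen0 by (simp add: astep_def)
    next
      case (Len r) then show ?thesis using False Bj B1
        by (auto simp: astep_def Bd_Suc intro!: gen)
    next
      case (Rd r s) then show ?thesis using False B1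
        by (auto simp: astep_def Bd_Suc intro!: gen)
    next
      case (Out r) then show ?thesis using False gen0 by (simp add: astep_def)
    next
      case (Qry r s) then show ?thesis using False B1
        by (auto simp: astep_def Bd_Suc intro!: gen)
    qed
  qed
qed

definition Corr :: "nat \<Rightarrow> cfg \<Rightarrow> nat \<times> (nat \<Rightarrow> av) \<Rightarrow> bool" where
  "Corr x c pr \<longleftrightarrow> pc c = fst pr \<and> (\<forall>r. int (reg c r) = int (fst (snd pr r)) * int x + snd (snd pr r))"

lemma int_diff_max: "int (a - b) = max 0 (int a - int b)"
  by (cases "b \<le> a") (auto simp: of_nat_diff)

lemma lin_ge: "1 \<le> a \<Longrightarrow> \<bar>b\<bar> \<le> B \<Longrightarrow> 0 \<le> X \<Longrightarrow> X - B \<le> int a * X + (b::int)"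
proof -
  assume a: "1 \<le> a" "\<bar>b\<bar> \<le> B" "0 \<le> X"
  have "X \<le> int a * X" using mult_right_mono[of 1 "int a" X] a by simp
  then show ?thesis using a by linarith
qed

lemma lin_ge2: "2 \<le> a \<Longrightarrow> \<bar>b\<bar> \<le> B \<Longrightarrow> 0 \<le> X \<Longrightarrow> 2 * X - B \<le> int a * X + (b::int)"
proof -
  assume a: "2 \<le> a" "\<bar>b\<bar> \<le> B" "0 \<le> X"
  have "2 * X \<le> int a * X" using mult_right_mono[of 2 "int a" X] a by simp
  then show ?thesis using a by linarith
qed

lemma corr_upd: "Corr x c (p, G) \<Longrightarrow> int v = int (fst w) * int x + snd w \<Longrightarrow>
   Corr x (c\<lparr>pc := Suc p, reg := (reg c)(r := v)\<rparr>) (Suc p, G(r := w))"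
  unfolding Corr_def by auto

lemma Corr_trans: "Corr x (c\<lparr>pc := a, reg := b, trans := z\<rparr>) pr = Corr x (c\<lparr>pc := a, reg := b\<rparr>) pr"
  by (simp add: Corr_def)

lemma corr_step:
  assumes inv: "Inv j t G" and cr: "Corr x c (p, G)" and big: "4 * Bd j t < int x"
    and q: "\<And>y. Q y = (y = x)" and xs: "xs = replicate j x"
  shows "Corr x (step P Q xs c) (astep P j (p, G))"
proof -
  let ?B = "Bd j t"
  have B1: "1 \<le> ?B" by (rule Bd_ge1)
  have Bj: "int j < ?B" by (rule Bd_j)
  have i: "\<And>r. fst (G r) \<le> 2 ^ t" "\<And>r. \<bar>snd (G r)\<bar> \<le> ?B" "\<And>r. fst (G r) = 0 \<Longrightarrow> 0 \<le> snd (G r)"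
    using inv unfolding Inv_def by auto
  have v: "\<And>r. int (reg c r) = int (fst (G r)) * int x + snd (G r)" and pcc: "pc c = p"
    using cr unfolding Corr_def by auto
  have x0: "0 \<le> int x" by simp
  have big1: "\<And>r. 1 \<le> fst (G r) \<Longrightarrow> int x - ?B \<le> int (reg c r)"
    using v lin_ge[OF _ i(2) x0] by metis
  have zero0: "\<And>r. fst (G r) = 0 \<Longrightarrow> int (reg c r) = snd (G r)" using v by simp
  show ?thesis
  proof (cases "length P \<le> p")
    case True then show ?thesis using cr pcc by (simp add: astep_def step_app)
  next
    case False
    note F = False
    show ?thesis
    proof (cases "P ! p")
      case (Inc r)
      have "int (reg c r + 1) = int (fst (G r)) * int x + (snd (G r) + 1)" using v[of r] by simp
      then show ?thesis using F Inc pcc corr_upd[OF cr, of "reg c r + 1" "(fst (G r), snd (G r) + 1)" r]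
        by (simp add: astep_def step_app)
    next
      case (Dec r)
      have "int (reg c r - 1) = int (fst (adec (G r))) * int x + snd (adec (G r))"
      proof (cases "0 < fst (G r)")
        case True
        then have "int x - ?B \<le> int (reg c r)" using big1 by simp
        then have "1 \<le> reg c r" using big B1 by linarith
        then have "int (reg c r - 1) = int (reg c r) - 1" by (simp add: of_nat_diff)
        then show ?thesis using v[of r] True by (cases "G r") auto
      next
        case False
        then show ?thesis using zero0[of r] int_diff_max[of "reg c r" 1] by (cases "G r") auto
      qed
      then show ?thesis using F Dec pcc corr_upd[OF cr, of "reg c r - 1" "adec (G r)" r]
        by (simp add: astep_def step_app)
    next
      case (Add r s u)
      have "int (reg c s + reg c u) = int (fst (G s) + fst (G u)) * int x + (snd (G s) + snd (G u))"
        using v[of s] v[of u] by (simp add: algebra_simps)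
      then show ?thesis using F Add pcc corr_upd[OF cr, of "reg c s + reg c u" "(fst (G s) + fst (G u), snd (G s) + snd (G u))" r]
        by (simp add: astep_def step_app)
    next
      case (Sub r s u)
      have "int (reg c s - reg c u) = int (fst (asub (G s) (G u))) * int x + snd (asub (G s) (G u))"
      proof -
        obtain a1 b1 a2 b2 where g: "G s = (a1, b1)" "G u = (a2, b2)" by (cases "G s"; cases "G u")
        have d: "int (reg c s) - int (reg c u) = (int a1 - int a2) * int x + (b1 - b2)"
          using v[of s] v[of u] g by (simp add: algebra_simps)
        have bb: "\<bar>b1\<bar> \<le> ?B" "\<bar>b2\<bar> \<le> ?B" using i(2)[of s] i(2)[of u] g by auto
        show ?thesis
        proof (cases "a2 < a1")
          case True
          then have "1 \<le> a1 - a2" by simp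
          then have "int x - 2 * ?B \<le> int (a1 - a2) * int x + (b1 - b2)"
            using lin_ge[of "a1 - a2" "b1 - b2" "2 * ?B" "int x"] bb by linarith
          moreover have "int (a1 - a2) = int a1 - int a2" using True by simp
          ultimately show ?thesis using d g True big B1 int_diff_max[of "reg c s" "reg c u"] by auto
        next
          case False
          note nlt = False
          show ?thesis
          proof (cases "a1 < a2")
            case True
            then have "1 \<le> a2 - a1" by simp
            then have "int x - 2 * ?B \<le> int (a2 - a1) * int x + (b2 - b1)"
              using lin_ge[of "a2 - a1" "b2 - b1" "2 * ?B" "int x"] bb by linarith
            moreover have "int (a2 - a1) = int a2 - int a1" using True by simp
            ultimately have "int (reg c s) - int (reg c u) < 0" using d big B1 by (simp add: algebra_simps)
            then show ?thesis using g True nlt int_diff_max[of "reg c s" "reg c u"] by auto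
          next
            case False
            then have "a1 = a2" using nlt by simp
            then show ?thesis using d g nlt int_diff_max[of "reg c s" "reg c u"] by auto
          qed
        qed
      qed
      then show ?thesis using F Sub pcc corr_upd[OF cr, of "reg c s - reg c u" "asub (G s) (G u)" r]
        by (simp add: astep_def step_app)
    next
      case (Jz r l)
      have "(reg c r = 0) = (G r = (0, 0))"
      proof (cases "fst (G r) = 0")
        case True then show ?thesis using zero0[of r] by (cases "G r") auto
      next
        case False
        then have "int x - ?B \<le> int (reg c r)" using big1 by simp
        then have "reg c r \<noteq> 0" using big B1 by linarith
        then show ?thesis using False by auto
      qed
      then show ?thesis using F Jz pcc cr by (auto simp: astep_def step_app Corr_def)
    next
      case (Len r)
      have "int (length xs) = int (fst (0::nat, int j)) * int x + snd (0::nat, int j)" using xs by simp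
      then show ?thesis using F Len pcc corr_upd[OF cr, of "length xs" "(0, int j)" r]
        by (simp add: astep_def step_app)
    next
      case (Rd r s)
      let ?w = "if fst (G s) = 0 \<and> snd (G s) < int j then (1::nat, 0::int) else (0, 0)"
      have lt: "(reg c s < length xs) = (fst (G s) = 0 \<and> snd (G s) < int j)"
      proof (cases "fst (G s) = 0")
        case True then show ?thesis using zero0[of s] xs by auto
      next
        case False
        then have "int x - ?B \<le> int (reg c s)" using big1 by simp
        then have "\<not> reg c s < length xs" using big Bj xs by simp
        then show ?thesis using False by simp
      qed
      have "int (if reg c s < length xs then xs ! reg c s else 0) = int (fst ?w) * int x + snd ?w"
        using lt xs by auto
      then show ?thesis using F Rd pcc corr_upd[OF cr, of "if reg c s < length xs then xs ! reg c s else 0" ?w r]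
        by (simp add: astep_def step_app)
    next
      case (Out r)
      then show ?thesis using F pcc cr by (simp add: astep_def step_app Corr_def)
    next
      case (Qry r s)
      let ?w = "if G s = (1, 0) then (0::nat, 1::int) else (0, 0)"
      have eqx: "(reg c s = x) = (G s = (1, 0))"
      proof -
        obtain a b where g: "G s = (a, b)" by (cases "G s")
        have bb: "\<bar>b\<bar> \<le> ?B" using i(2)[of s] g by simp
        have vv: "int (reg c s) = int a * int x + b" using v[of s] g by simp
        consider "a = 0" | "a = 1" | "2 \<le> a" by linarith
        then show ?thesis
        proof cases
          case 1 then show ?thesis using vv bb big B1 g by auto
        next
          case 2 then show ?thesis using vv g by auto
        next
          case 3
          then have "2 * int x - ?B \<le> int (reg c s)" using lin_ge2[OF 3 bb x0] vv by simp
          then show ?thesis using 3 g big B1 by auto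
        qed
      qed
      have "int (if Q (reg c s) then 1 else 0) = int (fst ?w) * int x + snd ?w"
        using eqx q by auto
      then show ?thesis using F Qry pcc corr_upd[OF cr, of "if Q (reg c s) then 1 else 0" ?w r]
        by (simp add: astep_def step_app Corr_trans)
    qed
  qed
qed

lemma poly_bound: "\<exists>K\<ge>1. \<forall>x. poly p x \<le> K * (x + 1) ^ K" for p :: "nat poly"
proof (induction p rule: pCons_induct)
  case 0 then show ?case by (intro exI[of _ 1]) simp
next
  case (pCons a p)
  then obtain K where K: "K \<ge> 1" "\<And>x. poly p x \<le> K * (x + 1) ^ K" by blast
  let ?K = "a + K + 1"
  have "poly (pCons a p) x \<le> ?K * (x + 1) ^ ?K" for x
  proof -
    have e1: "(x + 1) ^ (K + 1) \<le> (x + 1) ^ ?K" by (rule power_increasing) auto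
    have e2: "1 \<le> (x + 1) ^ ?K" using one_le_power[of "x + 1" ?K] by simp
    have "poly (pCons a p) x = a + x * poly p x" by simp
    also have "\<dots> \<le> a + x * (K * (x + 1) ^ K)" using K(2)[of x] by (simp add: mult_left_mono)
    also have "\<dots> \<le> a + K * (x + 1) ^ (K + 1)" by (simp add: algebra_simps mult_right_mono)
    also have "\<dots> \<le> a * (x + 1) ^ ?K + K * (x + 1) ^ ?K"
      using e1 e2 by (intro add_mono) (simp_all add: mult_left_mono)
    also have "\<dots> \<le> ?K * (x + 1) ^ ?K" by (simp add: algebra_simps)
    finally show ?thesis .
  qed
  then show ?case by (intro exI[of _ ?K]) auto
qed

lemma poly_mono_nat: "m \<le> n \<Longrightarrow> poly p m \<le> poly p n" for p :: "nat poly"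
proof (induction p rule: pCons_induct)
  case 0 then show ?case by simp
next
  case (pCons a p)
  then show ?case by (simp add: mult_mono)
qed

lemma A4_ge: "L + 1 \<le> A4 L" using A4_gt[of L] by simp

lemma sq_bound: "(u + 1) ^ 2 \<le> (2::nat) ^ (2 * u)"
proof -
  have "u + 1 \<le> 2 ^ u" by (simp add: Suc_le_eq)
  then have "(u + 1) ^ 2 \<le> (2 ^ u) ^ 2" by (rule power_mono) simp
  then show ?thesis by (simp add: power_mult[symmetric] mult.commute)
qed

lemma growth: "\<exists>N\<ge>1. 4 * 2 ^ poly p (N + 1) * (poly p (N + 1) + 1) < A4 N" for p :: "nat poly"
proof -
  obtain K where K: "K \<ge> 1" "\<And>x. poly p x \<le> K * (x + 1) ^ K" using poly_bound by blast
  define u where "u = 2 * K + 8"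
  define L where "L = 2 * u - 1"
  have L1: "L + 1 = 2 * u" unfolding L_def u_def by simp
  define N where "N = L + 3"
  define q where "q = poly p (N + 1)"
  have q: "q \<le> K * (L + 5) ^ K" using K(2)[of "N + 1"] unfolding q_def N_def by (simp add: add.commute)
  have s1: "4 * 2 ^ q * (q + 1) \<le> (2::nat) ^ (2 * q + 2)"
  proof -
    have "q + 1 \<le> 2 ^ q" by (simp add: Suc_le_eq)
    then have "4 * 2 ^ q * (q + 1) \<le> 4 * 2 ^ q * 2 ^ q" by (rule mult_left_mono) simp
    also have "\<dots> = 2 ^ (2 * q + 2)" by (simp add: power_add mult_2 power_Suc)
    finally show ?thesis .
  qed
  have pk: "(L + 5) ^ K \<le> (2::nat) ^ ((L + 5) * K)"
  proof -
    have "L + 5 \<le> 2 ^ (L + 5)" using less_exp[of "L+5"] by linarith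
    then have "(L + 5) ^ K \<le> (2 ^ (L + 5)) ^ K" by (rule power_mono) simp
    then show ?thesis by (simp add: power_mult)
  qed
  have kk: "2 * K + 2 \<le> (2::nat) ^ (2 * K + 2)" using less_exp[of "2*K+2"] by linarith
  have "2 * q + 2 \<le> (2 * K + 2) * (L + 5) ^ K"
  proof -
    have a: "1 \<le> (L + 5) ^ K" using one_le_power[of "L + 5" K] by simp
    have b: "(2 * K + 2) * (L + 5) ^ K = 2 * (K * (L + 5) ^ K) + 2 * (L + 5) ^ K" by (simp add: algebra_simps)
    show ?thesis unfolding b using a q by linarith
  qed
  also have "\<dots> \<le> 2 ^ (2 * K + 2) * 2 ^ ((L + 5) * K)" using kk pk by (rule mult_le_mono)
  also have "\<dots> = 2 ^ (2 * K + 2 + (L + 5) * K)" by (simp add: power_add)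
  also have "\<dots> < 2 ^ (A4 (L + 1))"
  proof -
    have "(u + 1) ^ 2 \<le> (2::nat) ^ (L + 1)" using sq_bound[of u] L1 by simp
    moreover have "2 * K + 2 + (L + 5) * K < (u + 1) ^ 2"
      unfolding L_def u_def by (simp add: power2_eq_square algebra_simps)
    moreover have "(2::nat) ^ (L + 1) \<le> 2 ^ (A4 L)" using A4_ge[of L] by (rule power_increasing) simp
    ultimately have "2 * K + 2 + (L + 5) * K < A4 (L + 1)" by simp
    then show ?thesis by (rule power_strict_increasing) simp
  qed
  finally have "2 * q + 2 < A4 (L + 2)" by simp
  then have lt: "(2::nat) ^ (2 * q + 2) < 2 ^ A4 (L + 2)" by (rule power_strict_increasing) simp
  have eq: "A4 (Suc (L + 2)) = 2 ^ A4 (L + 2)" by (rule A4_Suc)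
  have l3: "L + 3 = Suc (L + 2)" by simp
  have "(2::nat) ^ (2 * q + 2) < A4 (L + 3)" unfolding l3 eq by (rule lt)
  with s1 have "4 * 2 ^ q * (q + 1) < A4 N" unfolding N_def by linarith
  then show ?thesis unfolding q_def by (intro exI[of _ N]) (simp add: N_def)
qed

definition arun :: "prog \<Rightarrow> nat \<Rightarrow> nat \<Rightarrow> nat \<times> (nat \<Rightarrow> av)" where
  "arun P j t = (astep P j ^^ t) (0, \<lambda>_. (0, 0))"

lemma Bd_mono: "t \<le> T \<Longrightarrow> Bd j t \<le> Bd j T"
  unfolding Bd_def by (intro mult_right_mono power_increasing) auto

lemma corr_run:
  assumes big: "4 * Bd j T < int x" and q: "\<And>y. Q y = (y = x)"
  shows "t \<le> T \<Longrightarrow> Corr x (run P Q (replicate j x) t) (arun P j t) \<and> Inv j t (snd (arun P j t))"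
proof (induction t)
  case 0
  show ?case by (simp add: arun_def Corr_def Inv_def init_cfg_def Bd_def)
next
  case (Suc t)
  then have ih: "Corr x (run P Q (replicate j x) t) (fst (arun P j t), snd (arun P j t))"
      "Inv j t (snd (arun P j t))" by auto
  have bt: "4 * Bd j t < int x" using Bd_mono[of t T j] Suc.prems big by linarith
  have a: "arun P j (Suc t) = astep P j (fst (arun P j t), snd (arun P j t))" by (simp add: arun_def)
  show ?case unfolding a run_Suc
    using corr_step[OF ih(2) ih(1) bt q refl, of P] inv_step[OF ih(2), of P "fst (arun P j t)"] by simp
qed

lemma transfer:
  assumes bx: "4 * Bd j s < int x" and by': "4 * Bd j s < int y"
    and qx: "\<And>z. Qx z = (z = x)" and qy: "\<And>z. Qy z = (z = y)"
    and h: "halted P (run P Qx (replicate j x) s)"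
  shows "halted P (run P Qy (replicate j y) s) \<and> (\<exists>a b. int (result P Qx (replicate j x)) = int a * int x + b
     \<and> int (result P Qy (replicate j y)) = int a * int y + b)"
proof -
  have cx: "Corr x (run P Qx (replicate j x) s) (arun P j s)" using corr_run[OF bx qx, of s P] by simp
  have cy: "Corr y (run P Qy (replicate j y) s) (arun P j s)" using corr_run[OF by' qy, of s P] by simp
  have pc: "pc (run P Qy (replicate j y) s) = pc (run P Qx (replicate j x) s)" using cx cy by (simp add: Corr_def)
  have hy: "halted P (run P Qy (replicate j y) s)" using h pc by (simp add: halted_def)
  have rx: "result P Qx (replicate j x) = reg (run P Qx (replicate j x) s) 0" using final_eq[OF h] by (simp add: result_def)
  have ry: "result P Qy (replicate j y) = reg (run P Qy (replicate j y) s) 0" using final_eq[OF hy] by (simp add: result_def)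
  have ex: "int (reg (run P Qx (replicate j x) s) 0) = int (fst (snd (arun P j s) 0)) * int x + snd (snd (arun P j s) 0)"
    using cx unfolding Corr_def by blast
  have ey: "int (reg (run P Qy (replicate j y) s) 0) = int (fst (snd (arun P j s) 0)) * int y + snd (snd (arun P j s) 0)"
    using cy unfolding Corr_def by blast
  show ?thesis using hy ex ey unfolding rx ry by blast
qed

lemma A4_gap: "1 \<le> N \<Longrightarrow> A4 N + 2 \<le> A4 (Suc N)"
proof -
  assume N: "1 \<le> N"
  have "A4 1 \<le> A4 N" using N A4_smono strict_mono_less_eq by blast
  then have k2: "2 \<le> A4 N" by simp
  obtain k where k: "A4 N = Suc k" using k2 by (cases "A4 N") auto
  have "k < 2 ^ k" by simp
  then have "Suc k \<le> 2 ^ k" by (simp add: Suc_le_eq)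
  then have "2 * Suc k \<le> 2 ^ Suc k" by simp
  then show ?thesis using k k2 by simp
qed

lemma restr_const: "restr (\<lambda>_. c) j = replicate j c"
  by (simp add: restr_def map_replicate_const)

lemma result_Nil: "result [] Q xs = 0"
proof -
  have "halted [] (run [] Q xs 0)" by (simp add: halted_def)
  then show ?thesis using final_eq[of "[]" Q xs 0] by (simp add: result_def init_cfg_def)
qed

lemma Bd_mono2: "j \<le> q \<Longrightarrow> t \<le> q \<Longrightarrow> Bd j t \<le> 2 ^ q * (int q + 1)"
  unfolding Bd_def by (intro mult_mono power_increasing) auto

lemma F4_not_O: "F4 \<notin> PRT_O"
proof
  assume "F4 \<in> PRT_O"
  then obtain M p where c: "\<forall>n f. range f = F4 n \<longrightarrow>
        conv_within F4 M (\<lambda>x. x \<in> F4 n) (restr f) (F4 n) (poly p (mi F4 (F4 n)))"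
    unfolding PRT_O_def by blast
  define Or where "Or n = (\<lambda>x. x \<in> F4 n)" for n
  have orx: "\<And>z. Or n z = (z = A4 n)" for n by (simp add: Or_def F4_def)
  have cn: "conv_within F4 M (Or n) (\<lambda>j. replicate j (A4 n)) (F4 n) (poly p n)" for n
  proof -
    have "range (\<lambda>_::nat. A4 n) = F4 n" by (simp add: F4_def)
    then have "conv_within F4 M (Or n) (restr (\<lambda>_. A4 n)) (F4 n) (poly p (mi F4 (F4 n)))"
      using c unfolding Or_def by blast
    moreover have "mi F4 (F4 n) = n" by (rule mi_inj4) (rule F4_inj)
    ultimately show ?thesis unfolding restr_const by simp
  qed
  have "\<forall>n. \<exists>i. (\<forall>j. defined M (Or n) (replicate j (A4 n)))
        \<and> (\<forall>j\<ge>i. result M (Or n) (replicate j (A4 n)) = result M (Or n) (replicate i (A4 n)))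
        \<and> F4 (result M (Or n) (replicate i (A4 n))) = F4 n
        \<and> (\<Sum>j\<le>i. steps M (Or n) (replicate j (A4 n))) < poly p n"
    using cn unfolding conv_within_def by blast
  then obtain I where HI: "\<And>n. (\<forall>j. defined M (Or n) (replicate j (A4 n)))
        \<and> (\<forall>j\<ge>I n. result M (Or n) (replicate j (A4 n)) = result M (Or n) (replicate (I n) (A4 n)))
        \<and> F4 (result M (Or n) (replicate (I n) (A4 n))) = F4 n
        \<and> (\<Sum>j\<le>I n. steps M (Or n) (replicate j (A4 n))) < poly p n"
    by metis
  have def: "\<And>n j. defined M (Or n) (replicate j (A4 n))" using HI by blast
  have res: "\<And>n j. I n \<le> j \<Longrightarrow> result M (Or n) (replicate j (A4 n)) = n"
  proof -
    fix n j assume "I n \<le> j"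
    then have "result M (Or n) (replicate j (A4 n)) = result M (Or n) (replicate (I n) (A4 n))" using HI by blast
    moreover have "result M (Or n) (replicate (I n) (A4 n)) = n" using HI[of n] F4_inj by blast
    ultimately show "result M (Or n) (replicate j (A4 n)) = n" by simp
  qed
  have sum: "\<And>n. (\<Sum>j\<le>I n. steps M (Or n) (replicate j (A4 n))) < poly p n" using HI by blast
  show False
  proof (cases "M = []")
    case True
    then have "result M (Or 1) (replicate (I 1) (A4 1)) = 0" using result_Nil by simp
    then show False using res[of 1 "I 1"] by simp
  next
    case False
    have sp: "\<And>n j. 1 \<le> steps M (Or n) (replicate j (A4 n))" using steps_pos[OF False] def by blast
    have Ilt: "I n < poly p n" for n
    proof -
      have "(\<Sum>j\<le>I n. (1::nat)) \<le> (\<Sum>j\<le>I n. steps M (Or n) (replicate j (A4 n)))"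
        by (rule sum_mono) (rule sp)
      then show ?thesis using sum[of n] by simp
    qed
    have slt: "steps M (Or n) (replicate (I n) (A4 n)) < poly p n" for n
    proof -
      have "steps M (Or n) (replicate (I n) (A4 n)) \<le> (\<Sum>j\<le>I n. steps M (Or n) (replicate j (A4 n)))"
        by (rule member_le_sum) auto
      then show ?thesis using sum[of n] by simp
    qed
    obtain N where N: "N \<ge> 1" "4 * 2 ^ poly p (N + 1) * (poly p (N + 1) + 1) < A4 N" using growth by blast
    let ?q = "poly p (N + 1)"
    have pmono: "poly p N \<le> ?q" by (rule poly_mono_nat) simp
    have gap: "A4 N + 2 \<le> A4 (N + 1)" using A4_gap[OF N(1)] by simp
    have A4le: "A4 N \<le> A4 (N + 1)" using gap by simp
    have key: "False" if wo: "(w = N \<and> v = N + 1) \<or> (w = N + 1 \<and> v = N)" and Ivw: "I v \<le> I w" for w v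
    proof -
      let ?j = "I w"
      let ?s = "steps M (Or w) (replicate ?j (A4 w))"
      have pw: "poly p w \<le> ?q" using wo pmono by auto
      have js: "?j \<le> ?q" "?s \<le> ?q" using Ilt[of w] slt[of w] pw by linarith+
      have Bq: "4 * Bd ?j ?s \<le> 4 * (2 ^ ?q * (int ?q + 1))" using Bd_mono2[OF js] by simp
      have Nint: "4 * (2 ^ ?q * (int ?q + 1)) < int (A4 N)"
      proof -
        have "int (4 * 2 ^ ?q * (?q + 1)) < int (A4 N)" using N(2) by linarith
        then show ?thesis by (simp add: algebra_simps)
      qed
      have Aw: "A4 N \<le> A4 w" "A4 N \<le> A4 v" using wo A4le by auto
      have bw: "4 * Bd ?j ?s < int (A4 w)" using Bq Nint Aw(1) by linarith
      have bv: "4 * Bd ?j ?s < int (A4 v)" using Bq Nint Aw(2) by linarith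
      have hw: "halted M (run M (Or w) (replicate ?j (A4 w)) ?s)"
        using defined_halted[OF def[of w ?j]] by (simp add: final_def)
      obtain a b where ab: "int (result M (Or w) (replicate ?j (A4 w))) = int a * int (A4 w) + b"
          "int (result M (Or v) (replicate ?j (A4 v))) = int a * int (A4 v) + b"
        using transfer[OF bw bv orx orx hw] by blast
      have rw: "result M (Or w) (replicate ?j (A4 w)) = w" by (rule res) simp
      have rv: "result M (Or v) (replicate ?j (A4 v)) = v" by (rule res) (rule Ivw)
      have e1: "int N = int a * int (A4 N) + b" and e2: "int (N + 1) = int a * int (A4 (N + 1)) + b"
        using ab rw rv wo by auto
      have "int a * (int (A4 (N + 1)) - int (A4 N)) = 1" using e1 e2 by (simp add: algebra_simps)
      moreover have "2 \<le> int (A4 (N + 1)) - int (A4 N)" using gap by linarith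
      ultimately show False
      proof (cases "a = 0")
        case True then show ?thesis using \<open>int a * (int (A4 (N + 1)) - int (A4 N)) = 1\<close> by simp
      next
        case False
        then have "1 \<le> int a" by simp
        then have "2 \<le> int a * (int (A4 (N + 1)) - int (A4 N))"
          using \<open>2 \<le> int (A4 (N + 1)) - int (A4 N)\<close> mult_mono[of 1 "int a" 2 "int (A4 (N + 1)) - int (A4 N)"] by simp
        then show ?thesis using \<open>int a * (int (A4 (N + 1)) - int (A4 N)) = 1\<close> by simp
      qed
    qed
    show False
    proof (cases "I N \<le> I (N + 1)")
      case True then show False using key[of "N + 1" N] by simp
    next
      case False then show False using key[of N "N + 1"] by simp
    qed
  qed
qed

theorem theorem3p11:
  shows "(PRT \<subset> PRT_O \<and> PRT_O \<subset> PRT_TO)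
       \<and> (PRT \<subset> PRT_T \<and> PRT_T \<subset> PRT_TO)
       \<and> PRT_O - PRT_T \<noteq> {}
       \<and> PRT_T - PRT_O \<noteq> {}"
proof -
  have i1: "PRT \<subseteq> PRT_O" by (rule PRT_sub_O)
  have i2: "PRT_O \<subseteq> PRT_TO" by (rule PRT_O_sub_TO)
  have i3: "PRT \<subseteq> PRT_T" by (rule PRT_sub_T)
  have i4: "PRT_T \<subseteq> PRT_TO" by (rule PRT_T_sub_TO)
  have a: "F3 \<in> PRT_O" by (rule F3_PRT_O)
  have b: "F3 \<notin> PRT_T" by (rule F3_not_T)
  have c: "F4 \<in> PRT_T" by (rule F4_PRT_T)
  have d: "F4 \<notin> PRT_O" by (rule F4_not_O)
  show ?thesis using i1 i2 i3 i4 a b c d by blast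
qed

end
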